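(* Let $d\ge2$ and let $\mathbf X=(X_1,\dots,X_d)$ be a continuous random vector with identical marginals having finite, non-zero variance. Then $\mathbf X\in\mathrm{IC}^d$ if and only if for every $i,j\in[d]$ with $i\ne j$ there exists $r_{ij}\in[0,1]$ such that $\frac{C_{ij}+C_{ji}}{2}=r_{ij}M+(1-r_{ij})\Pi$, where $C_{ij}$ denotes the copula of $(X_i,X_j)$.
   Context: $M(u,v)=\min(u,v)$, $\Pi(u,v)=uv$ on $[0,1]^2$. For $X,Y$ non-degenerate with finite variance, $(X,Y)$ has invariant correlation $r$ if $\mathrm{Corr}(X,Y)=\mathrm{Corr}(g(X),g(Y))=r$ for every measurable $g$ with $g(X),g(Y)$ non-degenerate with finite variance. $\mathbf X\in\mathrm{IC}^d$ means there is a correlation matrix $R=(r_{ij})$ such that $(X_i,X_j)$ has invariant correlation $r_{ij}$ for all $i,j\in[d]$. *)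

theory Defs
  imports "HOL-Probability.Probability"
begin

definition finite_var :: "'a measure \<Rightarrow> ('a \<Rightarrow> real) \<Rightarrow> bool" where
  "finite_var M Y \<longleftrightarrow> Y \<in> borel_measurable M \<and> integrable M (\<lambda>\<omega>. (Y \<omega>)^2)"

definition nondegenerate :: "'a measure \<Rightarrow> ('a \<Rightarrow> real) \<Rightarrow> bool" where
  "nondegenerate M Y \<longleftrightarrow> \<not> (\<exists>c. AE \<omega> in M. Y \<omega> = c)"

definition covar :: "'a measure \<Rightarrow> ('a \<Rightarrow> real) \<Rightarrow> ('a \<Rightarrow> real) \<Rightarrow> real" where
  "covar M X Y = (\<integral>\<omega>. (X \<omega> - (\<integral>\<omega>'. X \<omega>' \<partial>M)) * (Y \<omega> - (\<integral>\<omega>'. Y \<omega>' \<partial>M)) \<partial>M)"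

definition var :: "'a measure \<Rightarrow> ('a \<Rightarrow> real) \<Rightarrow> real" where
  "var M X = covar M X X"

definition corr :: "'a measure \<Rightarrow> ('a \<Rightarrow> real) \<Rightarrow> ('a \<Rightarrow> real) \<Rightarrow> real" where
  "corr M X Y = covar M X Y / sqrt (var M X * var M Y)"

definition inv_corr :: "'a measure \<Rightarrow> ('a \<Rightarrow> real) \<Rightarrow> ('a \<Rightarrow> real) \<Rightarrow> real \<Rightarrow> bool" where
  "inv_corr M X Y r \<longleftrightarrow>
     finite_var M X \<and> finite_var M Y \<and> nondegenerate M X \<and> nondegenerate M Y \<and>
     corr M X Y = r \<and>
     (\<forall>g \<in> borel_measurable (borel :: real measure).
        finite_var M (g \<circ> X) \<and> finite_var M (g \<circ> Y) \<and>
        nondegenerate M (g \<circ> X) \<and> nondegenerate M (g \<circ> Y) \<longrightarrow>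
        corr M (g \<circ> X) (g \<circ> Y) = r)"

definition correlation_matrix :: "nat \<Rightarrow> (nat \<Rightarrow> nat \<Rightarrow> real) \<Rightarrow> bool" where
  "correlation_matrix d R \<longleftrightarrow>
     (\<forall>i<d. R i i = 1) \<and> (\<forall>i<d. \<forall>j<d. R i j = R j i) \<and>
     (\<forall>x :: nat \<Rightarrow> real. 0 \<le> (\<Sum>i<d. \<Sum>j<d. x i * R i j * x j))"

definition IC :: "'a measure \<Rightarrow> nat \<Rightarrow> (nat \<Rightarrow> 'a \<Rightarrow> real) \<Rightarrow> bool" where
  "IC M d X \<longleftrightarrow> (\<exists>R. correlation_matrix d R \<and>
      (\<forall>i<d. \<forall>j<d. inv_corr M (X i) (X j) (R i j)))"

definition is_copula :: "(real \<Rightarrow> real \<Rightarrow> real) \<Rightarrow> bool" where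
  "is_copula C \<longleftrightarrow>
     (\<forall>u\<in>{0..1}. C u 0 = 0 \<and> C 0 u = 0 \<and> C u 1 = u \<and> C 1 u = u) \<and>
     (\<forall>u1 u2 v1 v2. 0 \<le> u1 \<and> u1 \<le> u2 \<and> u2 \<le> 1 \<and> 0 \<le> v1 \<and> v1 \<le> v2 \<and> v2 \<le> 1 \<longrightarrow>
        0 \<le> C u2 v2 - C u2 v1 - C u1 v2 + C u1 v1)"

definition cdf_of :: "'a measure \<Rightarrow> ('a \<Rightarrow> real) \<Rightarrow> real \<Rightarrow> real" where
  "cdf_of M X x = measure M {\<omega> \<in> space M. X \<omega> \<le> x}"

definition copula_of :: "'a measure \<Rightarrow> ('a \<Rightarrow> real) \<Rightarrow> ('a \<Rightarrow> real) \<Rightarrow> (real \<Rightarrow> real \<Rightarrow> real) \<Rightarrow> bool" where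
  "copula_of M X Y C \<longleftrightarrow> is_copula C \<and>
     (\<forall>x y. measure M {\<omega> \<in> space M. X \<omega> \<le> x \<and> Y \<omega> \<le> y} = C (cdf_of M X x) (cdf_of M Y y))"

end

theory Submission
  imports Defs
begin
definition addM :: "'a measure \<Rightarrow> 'a measure \<Rightarrow> 'a measure" where
  "addM A B = measure_of (space A) (sets A) (\<lambda>S. emeasure A S + emeasure B S)"

lemma sets_addM [simp, measurable_cong]: "sets (addM A B) = sets A"
  unfolding addM_def by (simp add: sets.sigma_sets_eq sets.space_closed)

lemma space_addM [simp]: "space (addM A B) = space A"
  unfolding addM_def by simp

lemma emeasure_addM:
  assumes "sets B = sets A" "S \<in> sets A"
  shows "emeasure (addM A B) S = emeasure A S + emeasure B S"
  unfolding addM_def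
proof (rule emeasure_measure_of_sigma)
  show "sigma_algebra (space A) (sets A)" by (rule sets.sigma_algebra_axioms)
  show "positive (sets A) (\<lambda>S. emeasure A S + emeasure B S)"
    by (simp add: positive_def)
  show "countably_additive (sets A) (\<lambda>S. emeasure A S + emeasure B S)"
    unfolding countably_additive_def
  proof (intro allI impI)
    fix F :: "nat \<Rightarrow> 'a set" assume F: "range F \<subseteq> sets A" "disjoint_family F"
    then have FB: "range F \<subseteq> sets B" using assms by simp
    have "(\<Sum>i. emeasure A (F i) + emeasure B (F i)) = (\<Sum>i. emeasure A (F i)) + (\<Sum>i. emeasure B (F i))"
      by (rule suminf_add[symmetric]) auto
    also have "\<dots> = emeasure A (\<Union>(range F)) + emeasure B (\<Union>(range F))"
      using suminf_emeasure[OF F(1) F(2)] suminf_emeasure[OF FB F(2)] by simp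
    finally show "(\<Sum>i. emeasure A (F i) + emeasure B (F i)) = emeasure A (\<Union>(range F)) + emeasure B (\<Union>(range F))" .
  qed
qed (use assms in auto)

lemma nn_integral_addM:
  assumes sB: "sets B = sets A" and f: "f \<in> borel_measurable A"
  shows "nn_integral (addM A B) f = nn_integral A f + nn_integral B f"
proof -
  have fa: "f \<in> borel_measurable (addM A B)" using f by simp
  have spB: "space B = space A" using sB sets_eq_imp_space_eq by blast
  show ?thesis
  using fa
  proof induction
    case (cong f g)
    then show ?case using spB
      by (simp add: cong: nn_integral_cong_simp)
  next
    case (set S)
    then show ?case using sB by (simp add: emeasure_addM)
  next
    case (mult u c)
    then show ?case using sB
      by (simp add: nn_integral_cmult distrib_left)
  next
    case (add u v)
    then show ?case using sB
      by (simp add: nn_integral_add algebra_simps)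
  next
    case (seq U)
    have mA: "\<And>i. U i \<in> borel_measurable A" and mB: "\<And>i. U i \<in> borel_measurable B"
      using seq sB by (auto cong: measurable_cong_sets)
    have iA: "incseq (\<lambda>i. nn_integral A (U i))" and iB: "incseq (\<lambda>i. nn_integral B (U i))"
      using \<open>incseq U\<close> by (auto simp: incseq_def le_fun_def intro!: nn_integral_mono)
    have eqU: "(SUP i. U i) = (\<lambda>x. SUP i. U i x)" by (rule ext) (simp add: image_comp)
    have "nn_integral (addM A B) (SUP i. U i) = (SUP i. nn_integral (addM A B) (U i))"
      unfolding eqU by (rule nn_integral_monotone_convergence_SUP[OF \<open>incseq U\<close>]) (use seq in simp)
    also have "\<dots> = (SUP i. nn_integral A (U i) + nn_integral B (U i))"
      using seq by simp
    also have "\<dots> = (SUP i. nn_integral A (U i)) + (SUP i. nn_integral B (U i))"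
      by (rule ennreal_SUP_add[OF iA iB])
    also have "\<dots> = nn_integral A (SUP i. U i) + nn_integral B (SUP i. U i)"
      unfolding eqU using nn_integral_monotone_convergence_SUP[OF \<open>incseq U\<close> mA]
        nn_integral_monotone_convergence_SUP[OF \<open>incseq U\<close> mB] by simp
    finally show ?case .
  qed
qed

context prob_space
begin

lemma cdf_of_eq_cdf:
  assumes Y: "Y \<in> borel_measurable M"
  shows "cdf_of M Y = cdf (distr M borel Y)"
proof
  fix x
  have "{\<omega> \<in> space M. Y \<omega> \<le> x} = Y -` {..x} \<inter> space M" by auto
  then show "cdf_of M Y x = cdf (distr M borel Y) x"
    using Y by (simp add: cdf_of_def cdf_def measure_distr)
qed

lemma cdf_of_props:
  assumes Y: "Y \<in> borel_measurable M"
    and atom: "\<And>x. prob {\<omega> \<in> space M. Y \<omega> = x} = 0"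
  shows "mono (cdf_of M Y)" "\<And>x. isCont (cdf_of M Y) x"
    "(cdf_of M Y \<longlongrightarrow> 0) at_bot" "(cdf_of M Y \<longlongrightarrow> 1) at_top"
    "\<And>x. 0 \<le> cdf_of M Y x" "\<And>x. cdf_of M Y x \<le> 1"
proof -
  interpret D: real_distribution "distr M borel Y" using Y by simp
  note eq = cdf_of_eq_cdf[OF Y]
  show "mono (cdf_of M Y)" unfolding eq by (simp add: mono_def D.cdf_nondecreasing)
  show "isCont (cdf_of M Y) x" for x
  proof -
    have "Y -` {x} \<inter> space M = {\<omega> \<in> space M. Y \<omega> = x}" by auto
    then have "measure (distr M borel Y) {x} = 0" using Y atom by (simp add: measure_distr)
    then show ?thesis unfolding eq using D.isCont_cdf by blast
  qed
  show "(cdf_of M Y \<longlongrightarrow> 0) at_bot" unfolding eq by (rule D.cdf_lim_at_bot)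
  show "(cdf_of M Y \<longlongrightarrow> 1) at_top" unfolding eq by (rule D.cdf_lim_at_top_prob)
  show "0 \<le> cdf_of M Y x" for x unfolding eq by (rule D.cdf_nonneg)
  show "cdf_of M Y x \<le> 1" for x unfolding eq by (rule D.cdf_bounded_prob)
qed

lemma cdf_of_ivt:
  assumes Y: "Y \<in> borel_measurable M"
    and atom: "\<And>x. prob {\<omega> \<in> space M. Y \<omega> = x} = 0"
    and u: "0 < u" "u < 1"
  shows "\<exists>x. cdf_of M Y x = u"
proof -
  note P = cdf_of_props[OF Y atom]
  let ?F = "cdf_of M Y"
  have "eventually (\<lambda>x. ?F x < u) at_bot"
    using P(3) u by (intro order_tendstoD) auto
  then obtain a where a: "?F a < u" by (auto simp: eventually_at_bot_linorder)
  have "eventually (\<lambda>x. ?F x > u) at_top"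
    using P(4) u by (intro order_tendstoD) auto
  then obtain b where b: "?F b > u" by (auto simp: eventually_at_top_linorder)
  have ab: "a \<le> b"
  proof (rule ccontr)
    assume "\<not> a \<le> b" then have "?F b \<le> ?F a" using P(1) by (simp add: mono_def)
    then show False using a b by simp
  qed
  have "continuous_on {a..b} ?F" using P(2) by (simp add: continuous_at_imp_continuous_on)
  then show ?thesis using IVT'[of ?F a u b] a b ab by fastforce
qed

lemma cdf_of_measurable:
  assumes Y: "Y \<in> borel_measurable M"
    and atom: "\<And>x. prob {\<omega> \<in> space M. Y \<omega> = x} = 0"
  shows "cdf_of M Y \<in> borel_measurable borel"
  using cdf_of_props(1)[OF Y atom] by (rule borel_measurable_mono)

lemma cdf_of_uniform:
  assumes Y: "Y \<in> borel_measurable M"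
    and atom: "\<And>x. prob {\<omega> \<in> space M. Y \<omega> = x} = 0"
    and u: "0 \<le> u" "u \<le> 1"
  shows "prob {\<omega> \<in> space M. cdf_of M Y (Y \<omega>) \<le> u} = u"
proof -
  note P = cdf_of_props[OF Y atom]
  let ?F = "cdf_of M Y"
  have Fm: "?F \<in> borel_measurable borel" by (rule cdf_of_measurable[OF Y atom])
  show ?thesis
  proof (cases "u = 1")
    case True
    then have "{\<omega> \<in> space M. ?F (Y \<omega>) \<le> u} = space M" using P(6) by auto
    then show ?thesis using True by (simp add: prob_space)
  next
    case False
    then have u1: "u < 1" using u by simp
    let ?S = "{x. ?F x \<le> u}"
    have "eventually (\<lambda>x. ?F x > u) at_top"
      using P(4) u1 by (intro order_tendstoD) auto
    then obtain b where b: "\<And>x. x \<ge> b \<Longrightarrow> ?F x > u" by (auto simp: eventually_at_top_linorder)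
    have bdd: "bdd_above ?S"
    proof (rule bdd_aboveI[of _ b])
      fix x assume "x \<in> ?S"
      then show "x \<le> b" using b[of x] by (cases "x \<le> b") auto
    qed
    show ?thesis
    proof (cases "?S = {}")
      case True
      have "u = 0"
      proof (rule ccontr)
        assume "u \<noteq> 0" then have "u > 0" using u by simp
        then have "eventually (\<lambda>x. ?F x < u) at_bot"
          using P(3) by (intro order_tendstoD) auto
        then obtain a where "?F a < u" by (auto simp: eventually_at_bot_linorder)
        then show False using True by (metis (mono_tags, lifting) empty_iff less_imp_le mem_Collect_eq)
      qed
      have "{\<omega> \<in> space M. ?F (Y \<omega>) \<le> u} = {}" using True by auto
      then show ?thesis using \<open>u = 0\<close> by (metis measure_empty)
    next
      case False
      have cl: "closed ?S"
        using P(2) by (intro closed_Collect_le) (auto intro: continuous_at_imp_continuous_on continuous_on_const)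
      define s where "s = Sup ?S"
      have sS: "s \<in> ?S" unfolding s_def using closed_contains_Sup[OF False bdd cl] .
      have set_eq: "{\<omega> \<in> space M. ?F (Y \<omega>) \<le> u} = {\<omega> \<in> space M. Y \<omega> \<le> s}"
      proof safe
        fix \<omega> assume "?F (Y \<omega>) \<le> u"
        then show "Y \<omega> \<le> s" unfolding s_def by (intro cSup_upper bdd) auto
      next
        fix \<omega> assume "Y \<omega> \<le> s"
        then have "?F (Y \<omega>) \<le> ?F s" using P(1) by (simp add: mono_def)
        then show "?F (Y \<omega>) \<le> u" using sS by simp
      qed
      have "?F s = u"
      proof (rule ccontr)
        assume "?F s \<noteq> u" then have lt: "?F s < u" using sS by simp
        have "continuous (at s) ?F" using P(2) by simp
        then obtain d where d: "d > 0" "\<And>x. dist x s < d \<Longrightarrow> dist (?F x) (?F s) < u - ?F s"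
          unfolding continuous_at_eps_delta using lt by (metis diff_gt_0_iff_gt)
        have "dist (s + d/2) s < d" using d by (simp add: dist_real_def)
        then have "dist (?F (s + d/2)) (?F s) < u - ?F s" by (rule d(2))
        then have "?F (s + d/2) \<le> u" by (simp add: dist_real_def abs_less_iff)
        then have "s + d/2 \<le> s" unfolding s_def by (intro cSup_upper bdd) auto
        then show False using d by simp
      qed
      then show ?thesis using set_eq by (simp add: cdf_of_def)
    qed
  qed
qed

lemma prob_inter_null_diff:
  assumes "A \<in> events" "A' \<in> events" "B \<in> events" "B' \<in> events"
    "A \<subseteq> A'" "B \<subseteq> B'" "prob A = prob A'" "prob B = prob B'"
  shows "prob (A \<inter> B) = prob (A' \<inter> B')"
proof -
  have "prob (A' - A) = 0" using assms by (simp add: finite_measure_Diff)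
  moreover have "prob (B' - B) = 0" using assms by (simp add: finite_measure_Diff)
  ultimately have "prob ((A' - A) \<union> (B' - B)) = 0"
    using assms measure_subadditive[of "A' - A" M "B' - B"]
    by (simp add: measure_nonneg antisym)
  moreover have "A' \<inter> B' - A \<inter> B \<subseteq> (A' - A) \<union> (B' - B)" by auto
  ultimately have "prob (A' \<inter> B' - A \<inter> B) = 0"
    using assms by (metis (no_types, lifting) finite_measure_mono measure_nonneg antisym sets.Diff sets.Int sets.Un)
  moreover have "prob (A' \<inter> B' - A \<inter> B) = prob (A' \<inter> B') - prob (A \<inter> B)"
    using assms by (intro finite_measure_Diff) auto
  ultimately show ?thesis by simp
qed

end

definition cop :: "'a measure \<Rightarrow> ('a \<Rightarrow> real) \<Rightarrow> ('a \<Rightarrow> real) \<Rightarrow> real \<Rightarrow> real \<Rightarrow> real" where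
  "cop M Y Z u v = measure M {\<omega> \<in> space M. cdf_of M Y (Y \<omega>) \<le> u \<and> cdf_of M Z (Z \<omega>) \<le> v}"

context prob_space
begin

lemma cop_copula_of:
  assumes Y: "Y \<in> borel_measurable M" and atY: "\<And>x. prob {\<omega> \<in> space M. Y \<omega> = x} = 0"
    and Z: "Z \<in> borel_measurable M" and atZ: "\<And>x. prob {\<omega> \<in> space M. Z \<omega> = x} = 0"
  shows "copula_of M Y Z (cop M Y Z)"
proof -
  let ?FY = "cdf_of M Y" and ?FZ = "cdf_of M Z"
  have [measurable]: "?FY \<in> borel_measurable borel" "?FZ \<in> borel_measurable borel" "Y \<in> borel_measurable M" "Z \<in> borel_measurable M"
    using cdf_of_measurable[OF Y atY] cdf_of_measurable[OF Z atZ] Y Z by auto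
  note PY = cdf_of_props[OF Y atY] and PZ = cdf_of_props[OF Z atZ]
  note UY = cdf_of_uniform[OF Y atY] and UZ = cdf_of_uniform[OF Z atZ]
  define A where "A u v = {\<omega> \<in> space M. ?FY (Y \<omega>) \<le> u \<and> ?FZ (Z \<omega>) \<le> v}" for u v
  have Aev[measurable]: "A u v \<in> events" for u v unfolding A_def by measurable
  have copA: "cop M Y Z u v = prob (A u v)" for u v unfolding A_def cop_def by simp
  have b1: "cop M Y Z u 0 = 0" for u
  proof -
    have "prob (A u 0) \<le> prob {\<omega> \<in> space M. ?FZ (Z \<omega>) \<le> 0}"
      by (rule finite_measure_mono) (auto simp: A_def)
    then show ?thesis using UZ[of 0] copA[of u 0] measure_nonneg[of M "A u 0"] by simp
  qed
  have b2: "cop M Y Z 0 u = 0" for u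
  proof -
    have "prob (A 0 u) \<le> prob {\<omega> \<in> space M. ?FY (Y \<omega>) \<le> 0}"
      by (rule finite_measure_mono) (auto simp: A_def)
    then show ?thesis using UY[of 0] copA[of 0 u] measure_nonneg[of M "A 0 u"] by simp
  qed
  have b3: "cop M Y Z u 1 = u" if "u \<in> {0..1}" for u
  proof -
    have "A u 1 = {\<omega> \<in> space M. ?FY (Y \<omega>) \<le> u}" using PZ(6) by (auto simp: A_def)
    then show ?thesis using UY[of u] that copA by simp
  qed
  have b4: "cop M Y Z 1 u = u" if "u \<in> {0..1}" for u
  proof -
    have "A 1 u = {\<omega> \<in> space M. ?FZ (Z \<omega>) \<le> u}" using PY(6) by (auto simp: A_def)
    then show ?thesis using UZ[of u] that copA by simp
  qed
  have inc: "0 \<le> cop M Y Z u2 v2 - cop M Y Z u2 v1 - cop M Y Z u1 v2 + cop M Y Z u1 v1"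
    if "u1 \<le> u2" "v1 \<le> v2" for u1 u2 v1 v2
  proof -
    have "prob (A u2 v1 \<union> A u1 v2) = prob (A u2 v1) + prob (A u1 v2) - prob (A u2 v1 \<inter> A u1 v2)"
      by (rule measure_Un3) (auto simp: fmeasurable_eq_sets)
    moreover have "A u2 v1 \<inter> A u1 v2 = A u1 v1" using that by (auto simp: A_def)
    moreover have "prob (A u2 v1 \<union> A u1 v2) \<le> prob (A u2 v2)"
      using that by (intro finite_measure_mono) (auto simp: A_def)
    ultimately show ?thesis unfolding copA by simp
  qed
  have cop: "is_copula (cop M Y Z)"
    unfolding is_copula_def using b1 b2 b3 b4 inc by auto
  have "measure M {\<omega> \<in> space M. Y \<omega> \<le> x \<and> Z \<omega> \<le> y} = cop M Y Z (?FY x) (?FZ y)" for x y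
  proof -
    have "measure M ({\<omega> \<in> space M. Y \<omega> \<le> x} \<inter> {\<omega> \<in> space M. Z \<omega> \<le> y})
        = measure M ({\<omega> \<in> space M. ?FY (Y \<omega>) \<le> ?FY x} \<inter> {\<omega> \<in> space M. ?FZ (Z \<omega>) \<le> ?FZ y})"
    proof (rule prob_inter_null_diff)
      show "{\<omega> \<in> space M. Y \<omega> \<le> x} \<subseteq> {\<omega> \<in> space M. ?FY (Y \<omega>) \<le> ?FY x}"
        using PY(1) by (auto simp: mono_def)
      show "{\<omega> \<in> space M. Z \<omega> \<le> y} \<subseteq> {\<omega> \<in> space M. ?FZ (Z \<omega>) \<le> ?FZ y}"
        using PZ(1) by (auto simp: mono_def)
      show "prob {\<omega> \<in> space M. Y \<omega> \<le> x} = prob {\<omega> \<in> space M. ?FY (Y \<omega>) \<le> ?FY x}"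
        using UY[of "?FY x"] PY(5,6) by (simp add: cdf_of_def)
      show "prob {\<omega> \<in> space M. Z \<omega> \<le> y} = prob {\<omega> \<in> space M. ?FZ (Z \<omega>) \<le> ?FZ y}"
        using UZ[of "?FZ y"] PZ(5,6) by (simp add: cdf_of_def)
    qed measurable
    then show ?thesis unfolding cop_def by (simp add: Collect_conj_eq[symmetric] Int_def conj_commute) (smt (verit) Collect_cong)
  qed
  then show ?thesis using cop unfolding copula_of_def by blast
qed

end

lemma atMost_pair_real: "{..(x::real, y::real)} = {..x} \<times> {..y}"
  by (auto simp: less_eq_prod_def)

lemma quad_unique:
  fixes N1 N2 :: "(real \<times> real) measure"
  assumes s1: "sets N1 = sets borel" and s2: "sets N2 = sets borel"
    and eq: "\<And>x y. emeasure N1 ({..x} \<times> {..y}) = emeasure N2 ({..x} \<times> {..y})"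
    and fin: "\<And>x y. emeasure N1 ({..x} \<times> {..y}) \<noteq> \<infinity>"
  shows "N1 = N2"
proof -
  have sb: "sets (borel :: (real \<times> real) measure) = sigma_sets UNIV (range atMost)"
    by (subst borel_eq_atMost) (simp add: sets_measure_of)
  show ?thesis
  proof (rule measure_eqI_generator_eq[where E = "range atMost" and \<Omega> = UNIV
        and A = "\<lambda>i. {..(real i, real i)}"])
    show "Int_stable (range atMost :: (real \<times> real) set set)"
    proof (clarsimp simp: Int_stable_def)
      fix a b c d :: real
      have "{..(a, b)} \<inter> {..(c, d)} = {..(min a c, min b d)}" by (auto simp: less_eq_prod_def)
      then show "{..(a, b)} \<inter> {..(c, d)} \<in> range atMost" by blast
    qed
    show "range atMost \<subseteq> Pow (UNIV :: (real \<times> real) set)" by simp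
    show "\<And>X. X \<in> range atMost \<Longrightarrow> emeasure N1 X = emeasure N2 X"
      using eq by (auto simp: atMost_pair_real)
    show "sets N1 = sigma_sets UNIV (range atMost)" using s1 sb by simp
    show "sets N2 = sigma_sets UNIV (range atMost)" using s2 sb by simp
    show "range (\<lambda>i. {..(real i, real i)}) \<subseteq> range atMost" by auto
    show "(\<Union>i. {..(real i, real i)}) = UNIV"
    proof safe
      fix a b :: real
      obtain n :: nat where "max a b \<le> real n" using real_arch_simple by blast
      then show "(a, b) \<in> (\<Union>i. {..(real i, real i)})" by (auto simp: less_eq_prod_def)
    qed auto
    show "\<And>i. emeasure N1 {..(real i, real i)} \<noteq> \<infinity>"
      using fin by (simp add: atMost_pair_real)
  qed
qed

lemma (in finite_measure) integrable_mult_sq: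
  fixes f g :: "'a \<Rightarrow> real"
  assumes [measurable]: "f \<in> borel_measurable M" "g \<in> borel_measurable M"
    and "integrable M (\<lambda>x. (f x)^2)" "integrable M (\<lambda>x. (g x)^2)"
  shows "integrable M (\<lambda>x. f x * g x)"
proof (rule Bochner_Integration.integrable_bound)
  show "integrable M (\<lambda>x. (f x)^2 + (g x)^2)" using assms by simp
  show "(\<lambda>x. f x * g x) \<in> borel_measurable M" by measurable
  show "AE x in M. norm (f x * g x) \<le> norm ((f x)^2 + (g x)^2)"
  proof (rule AE_I2)
    fix x
    have "0 \<le> (\<bar>f x\<bar> - \<bar>g x\<bar>)^2" by simp
    then have "2 * \<bar>f x * g x\<bar> \<le> (f x)^2 + (g x)^2" by (simp add: power2_eq_square algebra_simps abs_mult)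
    then show "norm (f x * g x) \<le> norm ((f x)^2 + (g x)^2)" by simp
  qed
qed

context prob_space
begin

lemma distr_transfer:
  fixes h :: "real \<Rightarrow> real"
  assumes [measurable]: "Xi \<in> borel_measurable M" "Xj \<in> borel_measurable M" "h \<in> borel_measurable borel"
    and same: "distr M borel Xi = distr M borel Xj"
  shows "integrable M (\<lambda>\<omega>. h (Xj \<omega>)) \<longleftrightarrow> integrable M (\<lambda>\<omega>. h (Xi \<omega>))"
    "expectation (\<lambda>\<omega>. h (Xj \<omega>)) = expectation (\<lambda>\<omega>. h (Xi \<omega>))"
proof -
  show "integrable M (\<lambda>\<omega>. h (Xj \<omega>)) \<longleftrightarrow> integrable M (\<lambda>\<omega>. h (Xi \<omega>))"
    using integrable_distr_eq[of Xi M borel h] integrable_distr_eq[of Xj M borel h] same by simp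
  show "expectation (\<lambda>\<omega>. h (Xj \<omega>)) = expectation (\<lambda>\<omega>. h (Xi \<omega>))"
    using integral_distr[of Xi M borel h] integral_distr[of Xj M borel h] same by simp
qed

lemma sym_identity:
  fixes Xi Xj :: "'a \<Rightarrow> real" and g :: "real \<Rightarrow> real" and r :: real
  assumes Xi[measurable]: "Xi \<in> borel_measurable M" and Xj[measurable]: "Xj \<in> borel_measurable M"
    and same: "distr M borel Xi = distr M borel Xj"
    and r: "0 \<le> r" "r \<le> 1"
    and quad: "\<And>x y. prob {\<omega>\<in>space M. Xi \<omega> \<le> x \<and> Xj \<omega> \<le> y} + prob {\<omega>\<in>space M. Xj \<omega> \<le> x \<and> Xi \<omega> \<le> y}
       = 2 * (r * min (cdf_of M Xi x) (cdf_of M Xi y) + (1 - r) * (cdf_of M Xi x * cdf_of M Xi y))"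
    and g[measurable]: "g \<in> borel_measurable borel"
    and sq: "integrable M (\<lambda>\<omega>. (g (Xi \<omega>))^2)"
  shows "expectation (\<lambda>\<omega>. g (Xi \<omega>) * g (Xj \<omega>))
     = r * expectation (\<lambda>\<omega>. (g (Xi \<omega>))^2) + (1 - r) * (expectation (\<lambda>\<omega>. g (Xi \<omega>)))^2"
proof -
  let ?F = "cdf_of M Xi"
  define D where "D = distr M borel Xi"
  interpret D: prob_space D unfolding D_def by (rule prob_space_distr) simp
  have sD[simp]: "sets D = sets borel" unfolding D_def by simp
  have [measurable_cong]: "sets D = sets borel" by simp
  define s where "s = expectation (\<lambda>\<omega>. (g (Xi \<omega>))^2)"
  define m where "m = expectation (\<lambda>\<omega>. g (Xi \<omega>))"
  define p where "p = expectation (\<lambda>\<omega>. g (Xi \<omega>) * g (Xj \<omega>))"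
  have sqj: "integrable M (\<lambda>\<omega>. (g (Xj \<omega>))^2)"
    using distr_transfer(1)[of Xi Xj "\<lambda>x. (g x)^2"] same sq by simp
  have sj: "expectation (\<lambda>\<omega>. (g (Xj \<omega>))^2) = s"
    using distr_transfer(2)[of Xi Xj "\<lambda>x. (g x)^2"] same unfolding s_def by simp
  have intD2: "integrable D (\<lambda>x. (g x)^2)" unfolding D_def using sq
    by (subst integrable_distr_eq) auto
  have intD: "integrable D g"
    by (rule D.square_integrable_imp_integrable) (use intD2 in auto)
  have sD2: "integral\<^sup>L D (\<lambda>x. (g x)^2) = s" unfolding D_def s_def
    by (subst integral_distr) auto
  have mD: "integral\<^sup>L D g = m" unfolding D_def m_def
    by (subst integral_distr) auto
  have intp: "integrable M (\<lambda>\<omega>. g (Xi \<omega>) * g (Xj \<omega>))"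
    by (rule integrable_mult_sq) (use sq sqj in auto)
  define \<mu>1 :: "(real \<times> real) measure" where "\<mu>1 = distr M borel (\<lambda>\<omega>. (Xi \<omega>, Xj \<omega>))"
  define \<mu>2 :: "(real \<times> real) measure" where "\<mu>2 = distr M borel (\<lambda>\<omega>. (Xj \<omega>, Xi \<omega>))"
  define \<nu>1 :: "(real \<times> real) measure" where "\<nu>1 = distr M borel (\<lambda>\<omega>. (Xi \<omega>, Xi \<omega>))"
  define \<nu>2 :: "(real \<times> real) measure" where "\<nu>2 = D \<Otimes>\<^sub>M D"
  have s\<mu>1[simp]: "sets \<mu>1 = sets borel" and s\<mu>2[simp]: "sets \<mu>2 = sets borel"
    and s\<nu>1[simp]: "sets \<nu>1 = sets borel" unfolding \<mu>1_def \<mu>2_def \<nu>1_def by simp_all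
  have s\<nu>2[simp]: "sets \<nu>2 = sets borel"
    unfolding \<nu>2_def by (metis borel_prod sD sets_pair_measure_cong)
  have pm1[measurable]: "(\<lambda>\<omega>. (Xi \<omega>, Xj \<omega>)) \<in> M \<rightarrow>\<^sub>M (borel :: (real \<times> real) measure)"
    and pm2[measurable]: "(\<lambda>\<omega>. (Xj \<omega>, Xi \<omega>)) \<in> M \<rightarrow>\<^sub>M (borel :: (real \<times> real) measure)"
    and pm3[measurable]: "(\<lambda>\<omega>. (Xi \<omega>, Xi \<omega>)) \<in> M \<rightarrow>\<^sub>M (borel :: (real \<times> real) measure)"
    by (simp_all add: borel_prod[symmetric])
  have Qs[measurable]: "{..x} \<times> {..y} \<in> sets (borel :: (real \<times> real) measure)" for x y :: real
    by (simp add: borel_prod[symmetric])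
  have F_em: "emeasure D {..x} = ennreal (?F x)" for x
  proof -
    have "Xi -` {..x} \<inter> space M = {\<omega> \<in> space M. Xi \<omega> \<le> x}" by auto
    then show ?thesis unfolding D_def cdf_of_def by (simp add: emeasure_distr emeasure_eq_measure)
  qed
  have Fnn: "0 \<le> ?F x" for x by (simp add: cdf_of_def)
  have em\<mu>1: "emeasure \<mu>1 ({..x} \<times> {..y}) = ennreal (prob {\<omega>\<in>space M. Xi \<omega> \<le> x \<and> Xj \<omega> \<le> y})" for x y
  proof -
    have "(\<lambda>\<omega>. (Xi \<omega>, Xj \<omega>)) -` ({..x} \<times> {..y}) \<inter> space M = {\<omega>\<in>space M. Xi \<omega> \<le> x \<and> Xj \<omega> \<le> y}" by auto
    then show ?thesis unfolding \<mu>1_def by (simp add: emeasure_distr emeasure_eq_measure)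
  qed
  have em\<mu>2: "emeasure \<mu>2 ({..x} \<times> {..y}) = ennreal (prob {\<omega>\<in>space M. Xj \<omega> \<le> x \<and> Xi \<omega> \<le> y})" for x y
  proof -
    have "(\<lambda>\<omega>. (Xj \<omega>, Xi \<omega>)) -` ({..x} \<times> {..y}) \<inter> space M = {\<omega>\<in>space M. Xj \<omega> \<le> x \<and> Xi \<omega> \<le> y}" by auto
    then show ?thesis unfolding \<mu>2_def by (simp add: emeasure_distr emeasure_eq_measure)
  qed
  have em\<nu>1: "emeasure \<nu>1 ({..x} \<times> {..y}) = ennreal (min (?F x) (?F y))" for x y
  proof -
    have "(\<lambda>\<omega>. (Xi \<omega>, Xi \<omega>)) -` ({..x} \<times> {..y}) \<inter> space M = {\<omega>\<in>space M. Xi \<omega> \<le> min x y}" by auto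
    moreover have "?F (min x y) = min (?F x) (?F y)"
    proof -
      have mo: "a \<le> b \<Longrightarrow> ?F a \<le> ?F b" for a b
        unfolding cdf_of_def by (rule finite_measure_mono) auto
      show ?thesis using mo[of x y] mo[of y x] by (cases "x \<le> y") (auto simp: min_def)
    qed
    ultimately show ?thesis unfolding \<nu>1_def by (simp add: emeasure_distr emeasure_eq_measure cdf_of_def)
  qed
  have em\<nu>2: "emeasure \<nu>2 ({..x} \<times> {..y}) = ennreal (?F x * ?F y)" for x y
    unfolding \<nu>2_def using D.emeasure_pair_measure_Times[of "{..x}" D "{..y}"] F_em Fnn
    by (simp add: ennreal_mult)
  have meq: "addM \<mu>1 \<mu>2 = addM (scale_measure (ennreal (2 * r)) \<nu>1) (scale_measure (ennreal (2*(1-r))) \<nu>2)"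
  proof (rule quad_unique)
    show "sets (addM \<mu>1 \<mu>2) = sets borel" by simp
    show "sets (addM (scale_measure (ennreal (2 * r)) \<nu>1) (scale_measure (ennreal (2*(1-r))) \<nu>2)) = sets borel" by simp
    fix x y
    have Q: "{..x} \<times> {..y} \<in> sets (borel :: (real \<times> real) measure)" by measurable
    have "emeasure (addM \<mu>1 \<mu>2) ({..x} \<times> {..y})
        = ennreal (prob {\<omega>\<in>space M. Xi \<omega> \<le> x \<and> Xj \<omega> \<le> y} + prob {\<omega>\<in>space M. Xj \<omega> \<le> x \<and> Xi \<omega> \<le> y})"
      using Q by (simp add: emeasure_addM em\<mu>1 em\<mu>2 del: ennreal_plus) (rule ennreal_plus[symmetric]; simp)
    also have "\<dots> = ennreal (2 * r * min (?F x) (?F y) + 2 * (1 - r) * (?F x * ?F y))"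
      by (rule arg_cong[where f=ennreal]) (use quad[of x y] in \<open>simp add: algebra_simps\<close>)
    also have "\<dots> = ennreal (2 * r) * ennreal (min (?F x) (?F y)) + ennreal (2*(1-r)) * ennreal (?F x * ?F y)"
      using r Fnn by (simp add: ennreal_plus ennreal_mult)
    also have "\<dots> = emeasure (addM (scale_measure (ennreal (2 * r)) \<nu>1) (scale_measure (ennreal (2*(1-r))) \<nu>2)) ({..x} \<times> {..y})"
      using Q by (simp add: emeasure_addM em\<nu>1 em\<nu>2)
    finally show "emeasure (addM \<mu>1 \<mu>2) ({..x} \<times> {..y}) = emeasure (addM (scale_measure (ennreal (2 * r)) \<nu>1) (scale_measure (ennreal (2*(1-r))) \<nu>2)) ({..x} \<times> {..y})" .
    show "emeasure (addM \<mu>1 \<mu>2) ({..x} \<times> {..y}) \<noteq> \<infinity>"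
      using Q by (simp add: emeasure_addM em\<mu>1 em\<mu>2)
  qed
  define \<phi> :: "real \<times> real \<Rightarrow> ennreal" where "\<phi> z = ennreal ((g (fst z) + g (snd z))^2)" for z
  have \<phi>m[measurable]: "\<phi> \<in> borel_measurable borel" unfolding \<phi>_def borel_prod[symmetric] by measurable
  have \<phi>1: "\<phi> \<in> borel_measurable \<mu>1" using \<phi>m by (subst measurable_cong_sets[OF s\<mu>1 refl])
  have \<phi>2: "\<phi> \<in> borel_measurable \<nu>1" using \<phi>m by (subst measurable_cong_sets[OF s\<nu>1 refl])
  have \<phi>3: "\<phi> \<in> borel_measurable \<nu>2" using \<phi>m by (subst measurable_cong_sets[OF s\<nu>2 refl])
  have \<phi>4: "\<phi> \<in> borel_measurable (scale_measure c \<nu>1)" for c using \<phi>2 by (subst measurable_cong_sets[OF sets_scale_measure refl])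
  have "nn_integral (addM \<mu>1 \<mu>2) \<phi> = nn_integral (addM (scale_measure (ennreal (2 * r)) \<nu>1) (scale_measure (ennreal (2*(1-r))) \<nu>2)) \<phi>"
    by (simp add: meq)
  moreover have "nn_integral (addM \<mu>1 \<mu>2) \<phi> = nn_integral \<mu>1 \<phi> + nn_integral \<mu>2 \<phi>"
    by (rule nn_integral_addM) (simp_all add: \<phi>1 \<phi>4)
  moreover have "nn_integral (addM (scale_measure (ennreal (2 * r)) \<nu>1) (scale_measure (ennreal (2*(1-r))) \<nu>2)) \<phi>
     = nn_integral (scale_measure (ennreal (2 * r)) \<nu>1) \<phi> + nn_integral (scale_measure (ennreal (2*(1-r))) \<nu>2) \<phi>"
    by (rule nn_integral_addM) (simp_all add: \<phi>1 \<phi>4)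
  moreover have "nn_integral (scale_measure (ennreal (2 * r)) \<nu>1) \<phi> = ennreal (2 * r) * nn_integral \<nu>1 \<phi>"
    by (rule nn_integral_scale_measure) (simp add: \<phi>2 \<phi>3)
  moreover have "nn_integral (scale_measure (ennreal (2*(1-r))) \<nu>2) \<phi> = ennreal (2*(1-r)) * nn_integral \<nu>2 \<phi>"
    by (rule nn_integral_scale_measure) (simp add: \<phi>2 \<phi>3)
  ultimately have main: "nn_integral \<mu>1 \<phi> + nn_integral \<mu>2 \<phi> = ennreal (2 * r) * nn_integral \<nu>1 \<phi> + ennreal (2*(1-r)) * nn_integral \<nu>2 \<phi>"
    by simp
  have intsum: "integrable M (\<lambda>\<omega>. (g (Xi \<omega>) + g (Xj \<omega>))^2)"
    and valsum: "expectation (\<lambda>\<omega>. (g (Xi \<omega>) + g (Xj \<omega>))^2) = 2 * s + 2 * p"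
  proof -
    have e: "(\<lambda>\<omega>. (g (Xi \<omega>) + g (Xj \<omega>))^2) = (\<lambda>\<omega>. ((g (Xi \<omega>))^2 + 2 * (g (Xi \<omega>) * g (Xj \<omega>))) + (g (Xj \<omega>))^2)"
      by (simp add: fun_eq_iff power2_sum algebra_simps)
    show "integrable M (\<lambda>\<omega>. (g (Xi \<omega>) + g (Xj \<omega>))^2)" unfolding e using sq sqj intp by simp
    show "expectation (\<lambda>\<omega>. (g (Xi \<omega>) + g (Xj \<omega>))^2) = 2 * s + 2 * p" unfolding e using sq sqj intp sj
      by (simp add: s_def p_def)
  qed
  have "0 \<le> expectation (\<lambda>\<omega>. (g (Xi \<omega>) + g (Xj \<omega>))^2)" by (rule Bochner_Integration.integral_nonneg) simp
  then have nnsum: "0 \<le> 2 * s + 2 * p" using valsum by simp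
  have s0: "0 \<le> s" unfolding s_def by (rule Bochner_Integration.integral_nonneg) simp
  have I1: "nn_integral \<mu>1 \<phi> = ennreal (2 * s + 2 * p)"
  proof -
    have "nn_integral \<mu>1 \<phi> = (\<integral>\<^sup>+\<omega>. ennreal ((g (Xi \<omega>) + g (Xj \<omega>))^2) \<partial>M)"
      unfolding \<mu>1_def by (subst nn_integral_distr) (auto simp: \<phi>_def)
    also have "\<dots> = ennreal (2 * s + 2 * p)"
      using intsum valsum by (subst nn_integral_eq_integral) auto
    finally show ?thesis .
  qed
  have I2: "nn_integral \<mu>2 \<phi> = ennreal (2 * s + 2 * p)"
  proof -
    have "nn_integral \<mu>2 \<phi> = (\<integral>\<^sup>+\<omega>. ennreal ((g (Xi \<omega>) + g (Xj \<omega>))^2) \<partial>M)"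
      unfolding \<mu>2_def by (subst nn_integral_distr) (auto simp: \<phi>_def add.commute)
    also have "\<dots> = ennreal (2 * s + 2 * p)"
      using intsum valsum by (subst nn_integral_eq_integral) auto
    finally show ?thesis .
  qed
  have I3: "nn_integral \<nu>1 \<phi> = ennreal (4 * s)"
  proof -
    have e: "(\<lambda>\<omega>. (g (Xi \<omega>) + g (Xi \<omega>))^2) = (\<lambda>\<omega>. 4 * (g (Xi \<omega>))^2)"
      by (simp add: fun_eq_iff power2_eq_square algebra_simps)
    have "nn_integral \<nu>1 \<phi> = (\<integral>\<^sup>+\<omega>. ennreal ((g (Xi \<omega>) + g (Xi \<omega>))^2) \<partial>M)"
      unfolding \<nu>1_def by (subst nn_integral_distr) (auto simp: \<phi>_def)
    also have "\<dots> = ennreal (4 * s)"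
      unfolding e using sq by (subst nn_integral_eq_integral) (auto simp: s_def)
    finally show ?thesis .
  qed
  define h where "h x = (g x)^2 + 2 * m * g x + s" for x
  have inner: "(\<integral>\<^sup>+y. ennreal ((g x + g y)^2) \<partial>D) = ennreal (h x)" and hnn: "0 \<le> h x" for x
  proof -
    have e: "(\<lambda>y. (g x + g y)^2) = (\<lambda>y. ((g x)^2 + 2 * g x * g y) + (g y)^2)"
      by (simp add: fun_eq_iff power2_sum algebra_simps)
    have ii: "integrable D (\<lambda>y. (g x + g y)^2)" unfolding e using intD intD2 by simp
    have iv: "integral\<^sup>L D (\<lambda>y. (g x + g y)^2) = h x" unfolding e h_def using intD intD2 sD2 mD
      by (simp add: D.prob_space)
    show "(\<integral>\<^sup>+y. ennreal ((g x + g y)^2) \<partial>D) = ennreal (h x)"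
      using ii iv by (subst nn_integral_eq_integral) auto
    have "0 \<le> integral\<^sup>L D (\<lambda>y. (g x + g y)^2)" by (rule Bochner_Integration.integral_nonneg) simp
    then show "0 \<le> h x" using iv by simp
  qed
  have I4: "nn_integral \<nu>2 \<phi> = ennreal (2 * s + 2 * m^2)"
  proof -
    have pm: "\<phi> \<in> borel_measurable (D \<Otimes>\<^sub>M D)" using \<phi>3 unfolding \<nu>2_def .
    have "nn_integral \<nu>2 \<phi> = (\<integral>\<^sup>+x. \<integral>\<^sup>+y. \<phi> (x, y) \<partial>D \<partial>D)"
      unfolding \<nu>2_def by (rule D.nn_integral_fst[symmetric, OF pm])
    also have "\<dots> = (\<integral>\<^sup>+x. ennreal (h x) \<partial>D)"
      by (simp add: \<phi>_def inner)
    also have "\<dots> = ennreal (integral\<^sup>L D h)"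
    proof (rule nn_integral_eq_integral)
      show "integrable D h" unfolding h_def[abs_def] using intD intD2 by simp
    qed (use hnn in simp)
    also have "integral\<^sup>L D h = 2 * s + 2 * m^2"
      using intD intD2 sD2 mD unfolding h_def[abs_def] by (simp add: D.prob_space power2_eq_square)
    finally show ?thesis .
  qed
  have "ennreal (4 * s + 4 * p) = ennreal (8 * r * s + 2*(1-r)*(2 * s + 2 * m^2))"
  proof -
    have "ennreal (4 * s + 4 * p) = ennreal (2 * s + 2 * p) + ennreal (2 * s + 2 * p)"
      using nnsum by (subst ennreal_plus[symmetric]) (auto simp: algebra_simps)
    also have "\<dots> = ennreal (2 * r) * ennreal (4 * s) + ennreal (2*(1-r)) * ennreal (2 * s + 2 * m^2)"
      using main I1 I2 I3 I4 by simp
    also have "\<dots> = ennreal (8 * r * s) + ennreal (2*(1-r)*(2 * s + 2 * m^2))"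
    proof -
      have "ennreal (2 * r) * ennreal (4 * s) = ennreal (2 * r * (4 * s))"
        by (rule ennreal_mult[symmetric]) (use r s0 in auto)
      moreover have "ennreal (2*(1-r)) * ennreal (2 * s + 2 * m^2) = ennreal (2*(1-r)*(2 * s + 2 * m^2))"
        by (rule ennreal_mult[symmetric]) (use r s0 in auto)
      ultimately show ?thesis by (simp add: mult.assoc mult.left_commute)
    qed
    also have "\<dots> = ennreal (8 * r * s + 2*(1-r)*(2 * s + 2 * m^2))"
      using r s0 by (intro ennreal_plus[symmetric]) auto
    finally show ?thesis .
  qed
  then have "4 * s + 4 * p = 8 * r * s + 2*(1-r)*(2 * s + 2 * m^2)"
    using nnsum s0 r by (subst (asm) ennreal_inj) (auto intro!: add_nonneg_nonneg mult_nonneg_nonneg)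
  then have "p = r * s + (1 - r) * m^2" by (simp add: algebra_simps)
  then show ?thesis unfolding p_def s_def m_def .
qed

end

context prob_space
begin

lemma nondeg_two_values:
  fixes W :: "'a \<Rightarrow> real"
  assumes [measurable]: "W \<in> borel_measurable M"
    and a: "prob {\<omega> \<in> space M. W \<omega> = a} > 0" and b: "prob {\<omega> \<in> space M. W \<omega> = b} > 0" and ab: "a \<noteq> b"
  shows "nondegenerate M W"
  unfolding nondegenerate_def
proof
  assume "\<exists>c. AE \<omega> in M. W \<omega> = c"
  then obtain c where c: "AE \<omega> in M. W \<omega> = c" by blast
  have "prob {\<omega> \<in> space M. W \<omega> \<noteq> c} = 0"
    using c by (simp add: prob_eq_0)
  moreover have "a \<noteq> c \<or> b \<noteq> c" using ab by auto
  moreover have "prob {\<omega> \<in> space M. W \<omega> = a} \<le> prob {\<omega> \<in> space M. W \<omega> \<noteq> c}" if "a \<noteq> c"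
    using that by (intro finite_measure_mono) auto
  moreover have "prob {\<omega> \<in> space M. W \<omega> = b} \<le> prob {\<omega> \<in> space M. W \<omega> \<noteq> c}" if "b \<noteq> c"
    using that by (intro finite_measure_mono) auto
  ultimately show False using a b by force
qed

lemma corr_formula:
  fixes Xi Xj :: "'a \<Rightarrow> real" and g :: "real \<Rightarrow> real"
  assumes Xi[measurable]: "Xi \<in> borel_measurable M" and Xj[measurable]: "Xj \<in> borel_measurable M"
    and same: "distr M borel Xi = distr M borel Xj"
    and g[measurable]: "g \<in> borel_measurable borel"
    and sq: "integrable M (\<lambda>\<omega>. (g (Xi \<omega>))^2)"
    and nd: "nondegenerate M (g \<circ> Xi)"
  shows "corr M (g \<circ> Xi) (g \<circ> Xj) =
      (expectation (\<lambda>\<omega>. g (Xi \<omega>) * g (Xj \<omega>)) - (expectation (\<lambda>\<omega>. g (Xi \<omega>)))^2)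
      / (expectation (\<lambda>\<omega>. (g (Xi \<omega>))^2) - (expectation (\<lambda>\<omega>. g (Xi \<omega>)))^2)"
    and "expectation (\<lambda>\<omega>. (g (Xi \<omega>))^2) - (expectation (\<lambda>\<omega>. g (Xi \<omega>)))^2 > 0"
proof -
  define s where "s = expectation (\<lambda>\<omega>. (g (Xi \<omega>))^2)"
  define m where "m = expectation (\<lambda>\<omega>. g (Xi \<omega>))"
  define p where "p = expectation (\<lambda>\<omega>. g (Xi \<omega>) * g (Xj \<omega>))"
  have sqj: "integrable M (\<lambda>\<omega>. (g (Xj \<omega>))^2)"
    using distr_transfer(1)[of Xi Xj "\<lambda>x. (g x)^2"] same sq by simp
  have sj: "expectation (\<lambda>\<omega>. (g (Xj \<omega>))^2) = s"
    using distr_transfer(2)[of Xi Xj "\<lambda>x. (g x)^2"] same unfolding s_def by simp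
  have mj: "expectation (\<lambda>\<omega>. g (Xj \<omega>)) = m"
    using distr_transfer(2)[of Xi Xj g] same unfolding m_def by simp
  have ii: "integrable M (\<lambda>\<omega>. g (Xi \<omega>))"
    by (rule square_integrable_imp_integrable) (use sq in auto)
  have ij: "integrable M (\<lambda>\<omega>. g (Xj \<omega>))"
    by (rule square_integrable_imp_integrable) (use sqj in auto)
  have ip: "integrable M (\<lambda>\<omega>. g (Xi \<omega>) * g (Xj \<omega>))"
    by (rule integrable_mult_sq) (use sq sqj in auto)
  have cov_gen: "covar M (g \<circ> A) (g \<circ> B) = expectation (\<lambda>\<omega>. g (A \<omega>) * g (B \<omega>)) - m * m"
    if "integrable M (\<lambda>\<omega>. g (A \<omega>))" "integrable M (\<lambda>\<omega>. g (B \<omega>))"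
       "integrable M (\<lambda>\<omega>. g (A \<omega>) * g (B \<omega>))"
       "expectation (\<lambda>\<omega>. g (A \<omega>)) = m" "expectation (\<lambda>\<omega>. g (B \<omega>)) = m" for A B
  proof -
    have e: "(\<lambda>\<omega>. ((g \<circ> A) \<omega> - m) * ((g \<circ> B) \<omega> - m)) =
        (\<lambda>\<omega>. (g (A \<omega>) * g (B \<omega>) - m * g (A \<omega>)) - (m * g (B \<omega>) - m * m))"
      by (simp add: fun_eq_iff algebra_simps)
    have "covar M (g \<circ> A) (g \<circ> B) = integral\<^sup>L M (\<lambda>\<omega>. ((g \<circ> A) \<omega> - m) * ((g \<circ> B) \<omega> - m))"
      unfolding covar_def using that by (simp add: o_def)
    also have "\<dots> = (expectation (\<lambda>\<omega>. g (A \<omega>) * g (B \<omega>)) - expectation (\<lambda>\<omega>. m * g (A \<omega>)))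
        - (expectation (\<lambda>\<omega>. m * g (B \<omega>)) - expectation (\<lambda>\<omega>. m * m))"
      unfolding e using that
      by (subst Bochner_Integration.integral_diff; (intro Bochner_Integration.integral_diff integrable_diff integrable_mult_right integrable_const)?; simp?)+
    also have "\<dots> = expectation (\<lambda>\<omega>. g (A \<omega>) * g (B \<omega>)) - m * m"
      using that(4,5) by (simp add: prob_space)
    finally show ?thesis .
  qed
  have cij: "covar M (g \<circ> Xi) (g \<circ> Xj) = p - m * m"
    unfolding p_def by (rule cov_gen) (use ii ij ip mj in \<open>auto simp: m_def\<close>)
  have sq': "integrable M (\<lambda>\<omega>. g (Xi \<omega>) * g (Xi \<omega>))" using sq by (simp add: power2_eq_square)
  have sqj': "integrable M (\<lambda>\<omega>. g (Xj \<omega>) * g (Xj \<omega>))" using sqj by (simp add: power2_eq_square)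
  have "covar M (g \<circ> Xi) (g \<circ> Xi) = expectation (\<lambda>\<omega>. g (Xi \<omega>) * g (Xi \<omega>)) - m * m"
    by (rule cov_gen) (use ii sq' in \<open>auto simp: m_def\<close>)
  moreover have "expectation (\<lambda>\<omega>. g (Xi \<omega>) * g (Xi \<omega>)) = s" unfolding s_def by (simp add: power2_eq_square)
  ultimately have vi: "var M (g \<circ> Xi) = s - m * m" unfolding var_def by simp
  have "covar M (g \<circ> Xj) (g \<circ> Xj) = expectation (\<lambda>\<omega>. g (Xj \<omega>) * g (Xj \<omega>)) - m * m"
    by (rule cov_gen) (use ij sqj' mj in auto)
  moreover have "expectation (\<lambda>\<omega>. g (Xj \<omega>) * g (Xj \<omega>)) = s" using sj by (simp add: power2_eq_square)
  ultimately have vj: "var M (g \<circ> Xj) = s - m * m" unfolding var_def by simp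
  have pos: "s - m * m > 0"
  proof -
    have "var M (g \<circ> Xi) = integral\<^sup>L M (\<lambda>\<omega>. (g (Xi \<omega>) - m)^2)"
      unfolding var_def covar_def m_def by (simp add: o_def power2_eq_square)
    moreover have int2: "integrable M (\<lambda>\<omega>. (g (Xi \<omega>) - m)^2)"
    proof -
      have "(\<lambda>\<omega>. (g (Xi \<omega>) - m)^2) = (\<lambda>\<omega>. (g (Xi \<omega>))^2 - 2 * m * g (Xi \<omega>) + m^2)"
        by (simp add: fun_eq_iff power2_diff algebra_simps)
      then show ?thesis using sq ii by simp
    qed
    ultimately have ge: "var M (g \<circ> Xi) \<ge> 0" by simp
    have "var M (g \<circ> Xi) \<noteq> 0"
    proof
      assume "var M (g \<circ> Xi) = 0"
      then have "integral\<^sup>L M (\<lambda>\<omega>. (g (Xi \<omega>) - m)^2) = 0"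
        unfolding var_def covar_def m_def by (simp add: o_def power2_eq_square)
      then have "AE \<omega> in M. (g (Xi \<omega>) - m)^2 = 0"
        using integral_nonneg_eq_0_iff_AE[OF int2] by simp
      then have "AE \<omega> in M. (g \<circ> Xi) \<omega> = m" by eventually_elim simp
      then show False using nd unfolding nondegenerate_def by blast
    qed
    then show ?thesis using ge vi by simp
  qed
  have "corr M (g \<circ> Xi) (g \<circ> Xj) = (p - m * m) / sqrt ((s - m * m) * (s - m * m))"
    unfolding corr_def cij vi vj ..
  also have "\<dots> = (p - m * m) / (s - m * m)" using pos by simp
  finally show "corr M (g \<circ> Xi) (g \<circ> Xj) =
      (expectation (\<lambda>\<omega>. g (Xi \<omega>) * g (Xj \<omega>)) - (expectation (\<lambda>\<omega>. g (Xi \<omega>)))^2)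
      / (expectation (\<lambda>\<omega>. (g (Xi \<omega>))^2) - (expectation (\<lambda>\<omega>. g (Xi \<omega>)))^2)"
    unfolding p_def s_def m_def by (simp add: power2_eq_square)
  show "expectation (\<lambda>\<omega>. (g (Xi \<omega>))^2) - (expectation (\<lambda>\<omega>. g (Xi \<omega>)))^2 > 0"
    using pos unfolding s_def m_def by (simp add: power2_eq_square)
qed

end

context prob_space
begin

lemma E_ind2:
  fixes Y Z :: "'a \<Rightarrow> real"
  assumes [measurable]: "Y \<in> borel_measurable M" "Z \<in> borel_measurable M"
  shows "integrable M (\<lambda>\<omega>. (indicator {..a} (Y \<omega>) :: real) * indicator {..b} (Z \<omega>))"
    "expectation (\<lambda>\<omega>. (indicator {..a} (Y \<omega>) :: real) * indicator {..b} (Z \<omega>)) = prob {\<omega> \<in> space M. Y \<omega> \<le> a \<and> Z \<omega> \<le> b}"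
proof -
  have e: "(\<lambda>\<omega>. (indicator {..a} (Y \<omega>) :: real) * indicator {..b} (Z \<omega>)) = indicator {\<omega>. Y \<omega> \<le> a \<and> Z \<omega> \<le> b}"
    by (auto simp: fun_eq_iff indicator_def)
  have s: "{\<omega>. Y \<omega> \<le> a \<and> Z \<omega> \<le> b} \<inter> space M = {\<omega> \<in> space M. Y \<omega> \<le> a \<and> Z \<omega> \<le> b}" by auto
  have ev: "{\<omega> \<in> space M. Y \<omega> \<le> a \<and> Z \<omega> \<le> b} \<in> events" by measurable
  show "integrable M (\<lambda>\<omega>. (indicator {..a} (Y \<omega>) :: real) * indicator {..b} (Z \<omega>))"
    by (rule integrable_const_bound[where B=1]) (auto simp: indicator_def)
  show "expectation (\<lambda>\<omega>. (indicator {..a} (Y \<omega>) :: real) * indicator {..b} (Z \<omega>)) = prob {\<omega> \<in> space M. Y \<omega> \<le> a \<and> Z \<omega> \<le> b}"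
    unfolding e using s by simp
qed

lemma arith_div: "(X::real) / Y = r \<Longrightarrow> Y > 0 \<Longrightarrow> X = r * Y"
  by auto

lemma arith_lin: "(p::real) - q = r * (s - q) \<Longrightarrow> p = r * s + (1 - r) * q"
  by (simp add: algebra_simps)

lemma arith_fin:
  fixes A B C D u v w r :: real
  assumes "A + A + A + A = r * (u + u + 2 * u) + (1 - r) * (u + u)^2"
    "B + B + B + B = r * (v + v + 2 * v) + (1 - r) * (v + v)^2"
    "A + C + D + B = r * (u + v + 2 * w) + (1 - r) * (u + v)^2"
  shows "C + D = 2 * (r * w + (1 - r) * (u * v))"
proof -
  have "A = r * u + (1 - r) * u^2" using assms(1) by (simp add: power2_eq_square algebra_simps)
  moreover have "B = r * v + (1 - r) * v^2" using assms(2) by (simp add: power2_eq_square algebra_simps)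
  ultimately show ?thesis using assms(3) by (simp add: power2_eq_square algebra_simps)
qed

lemma E_sum4:
  fixes f1 f2 f3 f4 :: "'a \<Rightarrow> real"
  assumes "integrable M f1" "integrable M f2" "integrable M f3" "integrable M f4"
  shows "expectation (\<lambda>\<omega>. f1 \<omega> + f2 \<omega> + f3 \<omega> + f4 \<omega>) = expectation f1 + expectation f2 + expectation f3 + expectation f4"
  using assms by simp

lemma E_sum2:
  fixes f1 f2 :: "'a \<Rightarrow> real"
  assumes "integrable M f1" "integrable M f2"
  shows "expectation (\<lambda>\<omega>. f1 \<omega> + f2 \<omega>) = expectation f1 + expectation f2"
  using assms by simp

lemma ind_identity:
  fixes Xi Xj :: "'a \<Rightarrow> real"
  assumes Xi[measurable]: "Xi \<in> borel_measurable M" and Xj[measurable]: "Xj \<in> borel_measurable M"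
    and same: "distr M borel Xi = distr M borel Xj"
    and ic: "inv_corr M Xi Xj r"
    and x: "0 < cdf_of M Xi x" "cdf_of M Xi x < 1" and y: "0 < cdf_of M Xi y" "cdf_of M Xi y < 1"
  shows "prob {\<omega>\<in>space M. Xi \<omega> \<le> x \<and> Xj \<omega> \<le> y} + prob {\<omega>\<in>space M. Xj \<omega> \<le> x \<and> Xi \<omega> \<le> y}
       = 2 * (r * min (cdf_of M Xi x) (cdf_of M Xi y) + (1 - r) * (cdf_of M Xi x * cdf_of M Xi y))"
proof -
  let ?F = "cdf_of M Xi"
  have Fj: "cdf_of M Xj = ?F" using cdf_of_eq_cdf[OF Xi] cdf_of_eq_cdf[OF Xj] same by simp
  have mo: "a \<le> b \<Longrightarrow> ?F a \<le> ?F b" for a b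
    unfolding cdf_of_def by (rule finite_measure_mono) auto
  have Fmin: "?F (min a b) = min (?F a) (?F b)" for a b
    using mo[of a b] mo[of b a] by (cases "a \<le> b") (auto simp: min_def)
  have Fmax: "?F (max a b) = max (?F a) (?F b)" for a b
    using mo[of a b] mo[of b a] by (cases "a \<le> b") (auto simp: max_def)
  define P where "P c d = prob {\<omega>\<in>space M. Xi \<omega> \<le> c \<and> Xj \<omega> \<le> d}" for c d
  have Q: "prob {\<omega>\<in>space M. Y \<omega> \<le> c \<and> Y \<omega> \<le> d} = min (?F c) (?F d)" if "cdf_of M Y = ?F" for Y :: "'a \<Rightarrow> real" and c d
  proof -
    have "{\<omega>\<in>space M. Y \<omega> \<le> c \<and> Y \<omega> \<le> d} = {\<omega>\<in>space M. Y \<omega> \<le> min c d}" by auto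
    then show ?thesis using that Fmin[of c d] by (metis cdf_of_def)
  qed
  have mom: "P a a + P a b + P b a + P b b = r * (?F a + ?F b + 2 * min (?F a) (?F b)) + (1 - r) * (?F a + ?F b)^2"
    if a: "0 < ?F a" "?F a < 1" and b: "0 < ?F b" "?F b < 1" for a b
  proof -
    define G :: "real \<Rightarrow> real" where "G z = indicator {..a} z + indicator {..b} z" for z
    have Gm[measurable]: "G \<in> borel_measurable borel" unfolding G_def by measurable
    have Gb: "\<bar>G z\<bar> \<le> 2" for z unfolding G_def by (auto simp: indicator_def)
    have fv: "finite_var M (G \<circ> Y)" if [measurable]: "Y \<in> borel_measurable M" for Y
      unfolding finite_var_def
    proof
      show "G \<circ> Y \<in> borel_measurable M" by measurable
      show "integrable M (\<lambda>\<omega>. ((G \<circ> Y) \<omega>)^2)"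
      proof (rule integrable_const_bound[where B=4])
        show "AE \<omega> in M. norm (((G \<circ> Y) \<omega>)^2) \<le> 4"
        proof (rule AE_I2)
          fix \<omega>
          have "\<bar>G (Y \<omega>)\<bar>^2 \<le> 2^2" using Gb[of "Y \<omega>"] by (intro power_mono) auto
          then show "norm (((G \<circ> Y) \<omega>)^2) \<le> 4" by simp
        qed
      qed measurable
    qed
    have nd: "nondegenerate M (G \<circ> Y)" if [measurable]: "Y \<in> borel_measurable M" and FY: "cdf_of M Y = ?F" for Y
    proof (rule nondeg_two_values[where a=2 and b=0])
      show "G \<circ> Y \<in> borel_measurable M" by measurable
      have pY: "prob {\<omega>\<in>space M. Y \<omega> \<le> c} = ?F c" for c
        using fun_cong[OF FY, of c] by (simp add: cdf_of_def)
      have "{\<omega> \<in> space M. (G \<circ> Y) \<omega> = 2} = {\<omega> \<in> space M. Y \<omega> \<le> min a b}"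
        by (auto simp: G_def indicator_def)
      then show "prob {\<omega> \<in> space M. (G \<circ> Y) \<omega> = 2} > 0"
        using pY[of "min a b"] Fmin[of a b] a b by (simp add: min_def)
      have "{\<omega> \<in> space M. (G \<circ> Y) \<omega> = 0} = space M - {\<omega> \<in> space M. Y \<omega> \<le> max a b}"
        by (auto simp: G_def indicator_def)
      moreover have "prob (space M - {\<omega> \<in> space M. Y \<omega> \<le> max a b}) = 1 - ?F (max a b)"
        using pY[of "max a b"] prob_compl[of "{\<omega> \<in> space M. Y \<omega> \<le> max a b}"] by simp
      ultimately show "prob {\<omega> \<in> space M. (G \<circ> Y) \<omega> = 0} > 0"
        using Fmax[of a b] a b by (simp add: max_def)
    qed simp
    have sq: "integrable M (\<lambda>\<omega>. (G (Xi \<omega>))^2)" using fv[OF Xi] by (simp add: finite_var_def o_def)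
    have ndi: "nondegenerate M (G \<circ> Xi)" by (rule nd) simp_all
    have "corr M (G \<circ> Xi) (G \<circ> Xj) = r"
      using ic fv[OF Xi] fv[OF Xj] ndi nd[OF Xj Fj] Gm unfolding inv_corr_def by blast
    then have cf: "(expectation (\<lambda>\<omega>. G (Xi \<omega>) * G (Xj \<omega>)) - (expectation (\<lambda>\<omega>. G (Xi \<omega>)))^2)
      / (expectation (\<lambda>\<omega>. (G (Xi \<omega>))^2) - (expectation (\<lambda>\<omega>. G (Xi \<omega>)))^2) = r"
      using corr_formula(1)[OF Xi Xj same Gm sq ndi] by simp
    have pos: "expectation (\<lambda>\<omega>. (G (Xi \<omega>))^2) - (expectation (\<lambda>\<omega>. G (Xi \<omega>)))^2 > 0"
      using corr_formula(2)[OF Xi Xj same Gm sq ndi] .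
    note I = E_ind2[OF Xi Xj] E_ind2[OF Xi Xi]
    have ep: "expectation (\<lambda>\<omega>. G (Xi \<omega>) * G (Xj \<omega>)) = P a a + P a b + P b a + P b b"
    proof -
      have e: "(\<lambda>\<omega>. G (Xi \<omega>) * G (Xj \<omega>)) = (\<lambda>\<omega>.
        (((indicator {..a} (Xi \<omega>) :: real) * indicator {..a} (Xj \<omega>) + (indicator {..a} (Xi \<omega>) :: real) * indicator {..b} (Xj \<omega>))
        + (indicator {..b} (Xi \<omega>) :: real) * indicator {..a} (Xj \<omega>)) + (indicator {..b} (Xi \<omega>) :: real) * indicator {..b} (Xj \<omega>))"
        by (simp add: fun_eq_iff G_def algebra_simps)
      show ?thesis unfolding e P_def by (subst E_sum4) (simp_all only: I)
    qed
    have es: "expectation (\<lambda>\<omega>. (G (Xi \<omega>))^2) = ?F a + ?F b + 2 * min (?F a) (?F b)"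
    proof -
      have e: "(\<lambda>\<omega>. (G (Xi \<omega>))^2) = (\<lambda>\<omega>.
        (((indicator {..a} (Xi \<omega>) :: real) * indicator {..a} (Xi \<omega>) + (indicator {..a} (Xi \<omega>) :: real) * indicator {..b} (Xi \<omega>))
        + (indicator {..a} (Xi \<omega>) :: real) * indicator {..b} (Xi \<omega>)) + (indicator {..b} (Xi \<omega>) :: real) * indicator {..b} (Xi \<omega>))"
        by (simp add: fun_eq_iff G_def algebra_simps power2_eq_square)
      have "expectation (\<lambda>\<omega>. (G (Xi \<omega>))^2) = prob {\<omega>\<in>space M. Xi \<omega> \<le> a \<and> Xi \<omega> \<le> a}
        + prob {\<omega>\<in>space M. Xi \<omega> \<le> a \<and> Xi \<omega> \<le> b} + prob {\<omega>\<in>space M. Xi \<omega> \<le> a \<and> Xi \<omega> \<le> b}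
        + prob {\<omega>\<in>space M. Xi \<omega> \<le> b \<and> Xi \<omega> \<le> b}"
        unfolding e by (subst E_sum4) (simp_all only: I)
      then show ?thesis using Q[of Xi a a] Q[of Xi a b] Q[of Xi b b] by simp
    qed
    have em: "expectation (\<lambda>\<omega>. G (Xi \<omega>)) = ?F a + ?F b"
    proof -
      have e: "(\<lambda>\<omega>. G (Xi \<omega>)) = (\<lambda>\<omega>.
        (indicator {..a} (Xi \<omega>) :: real) * indicator {..a} (Xi \<omega>) + (indicator {..b} (Xi \<omega>) :: real) * indicator {..b} (Xi \<omega>))"
        by (simp add: fun_eq_iff G_def indicator_def)
      have "expectation (\<lambda>\<omega>. G (Xi \<omega>)) = prob {\<omega>\<in>space M. Xi \<omega> \<le> a \<and> Xi \<omega> \<le> a}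
        + prob {\<omega>\<in>space M. Xi \<omega> \<le> b \<and> Xi \<omega> \<le> b}"
        unfolding e by (subst E_sum2) (simp_all only: I)
      then show ?thesis using Q[of Xi a a] Q[of Xi b b] by simp
    qed
    have "expectation (\<lambda>\<omega>. G (Xi \<omega>) * G (Xj \<omega>)) - (expectation (\<lambda>\<omega>. G (Xi \<omega>)))^2
       = r * (expectation (\<lambda>\<omega>. (G (Xi \<omega>))^2) - (expectation (\<lambda>\<omega>. G (Xi \<omega>)))^2)"
      by (rule arith_div[OF cf pos])
    then have "expectation (\<lambda>\<omega>. G (Xi \<omega>) * G (Xj \<omega>)) = r * expectation (\<lambda>\<omega>. (G (Xi \<omega>))^2) + (1 - r) * (expectation (\<lambda>\<omega>. G (Xi \<omega>)))^2"
      by (rule arith_lin)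
    then show ?thesis unfolding ep es em .
  qed
  have xx: "P x x + P x x + P x x + P x x = r * (?F x + ?F x + 2 * min (?F x) (?F x)) + (1 - r) * (?F x + ?F x)^2"
    by (rule mom) (use x in auto)
  have yy: "P y y + P y y + P y y + P y y = r * (?F y + ?F y + 2 * min (?F y) (?F y)) + (1 - r) * (?F y + ?F y)^2"
    by (rule mom) (use y in auto)
  have xy: "P x x + P x y + P y x + P y y = r * (?F x + ?F y + 2 * min (?F x) (?F y)) + (1 - r) * (?F x + ?F y)^2"
    by (rule mom) (use x y in auto)
  have "P x y + P y x = 2 * (r * min (?F x) (?F y) + (1 - r) * (?F x * ?F y))"
    by (rule arith_fin[OF _ _ xy]) (use xx yy in simp_all)
  moreover have "P y x = prob {\<omega>\<in>space M. Xj \<omega> \<le> x \<and> Xi \<omega> \<le> y}"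
    unfolding P_def by (simp add: conj_commute)
  ultimately show ?thesis unfolding P_def by simp
qed

end

lemma r_range:
  fixes C D :: "real \<Rightarrow> real \<Rightarrow> real"
  assumes C: "is_copula C" and D: "is_copula D"
    and id: "\<forall>u\<in>{0..1}. \<forall>v\<in>{0..1}. (C u v + D u v) / 2 = r * min u v + (1 - r) * (u * v)"
  shows "r \<in> {0..1}"
proof -
  have incC: "0 \<le> C u2 v2 - C u2 v1 - C u1 v2 + C u1 v1" and incD: "0 \<le> D u2 v2 - D u2 v1 - D u1 v2 + D u1 v1"
    if "0 \<le> u1" "u1 \<le> u2" "u2 \<le> 1" "0 \<le> v1" "v1 \<le> v2" "v2 \<le> 1" for u1 u2 v1 v2
    using C D that unfolding is_copula_def by blast+
  define H where "H u v = r * min u v + (1 - r) * (u * v)" for u v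
  have HCD: "C u v + D u v = 2 * H u v" if "u \<in> {0..1}" "v \<in> {0..1}" for u v
    using id that unfolding H_def by fastforce
  have incH: "0 \<le> H u2 v2 - H u2 v1 - H u1 v2 + H u1 v1"
    if "0 \<le> u1" "u1 \<le> u2" "u2 \<le> 1" "0 \<le> v1" "v1 \<le> v2" "v2 \<le> 1" for u1 u2 v1 v2
  proof -
    have "0 \<le> (C u2 v2 + D u2 v2) - (C u2 v1 + D u2 v1) - (C u1 v2 + D u1 v2) + (C u1 v1 + D u1 v1)"
      using incC[OF that] incD[OF that] by linarith
    then show ?thesis using that HCD by simp
  qed
  have r1: "r \<le> 1"
  proof -
    have "0 \<le> H (1/2) 1 - H (1/2) (1/2) - H 0 1 + H 0 (1/2)" by (rule incH) auto
    then show ?thesis unfolding H_def by (simp add: min_def)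
  qed
  have r0: "0 \<le> r"
  proof (rule ccontr)
    assume "\<not> 0 \<le> r" then have rn: "r < 0" by simp
    define h where "h = - r / (2 * (1 - r))"
    have h0: "0 < h" unfolding h_def using rn by (intro divide_pos_pos) auto
    have h1: "h \<le> 1" unfolding h_def using rn by (simp add: field_simps)
    have "0 \<le> H h h - H h 0 - H 0 h + H 0 0" by (rule incH) (use h0 h1 in auto)
    then have "0 \<le> r * h + (1 - r) * (h * h)" unfolding H_def using h0 by (simp add: min_def)
    moreover have "(1 - r) * h = - r / 2" unfolding h_def using rn by (simp add: field_simps)
    moreover have "r * h + (1 - r) * (h * h) = h * (r + (1 - r) * h)" by (simp add: algebra_simps)
    ultimately have "0 \<le> h * (r / 2)" by simp
    moreover have "h * (r / 2) < 0" using h0 rn by (simp add: mult_pos_neg)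
    ultimately show False by simp
  qed
  show ?thesis using r0 r1 by simp
qed

lemma identity_extend:
  fixes C D :: "real \<Rightarrow> real \<Rightarrow> real"
  assumes C: "is_copula C" and D: "is_copula D"
    and inner: "\<And>u v. 0 < u \<Longrightarrow> u < 1 \<Longrightarrow> 0 < v \<Longrightarrow> v < 1 \<Longrightarrow> (C u v + D u v) / 2 = r * min u v + (1 - r) * (u * v)"
  shows "\<forall>u\<in>{0..1}. \<forall>v\<in>{0..1}. (C u v + D u v) / 2 = r * min u v + (1 - r) * (u * v)"
proof (intro ballI)
  fix u v :: real assume u: "u \<in> {0..1}" and v: "v \<in> {0..1}"
  have bC: "C u 0 = 0" "C 0 v = 0" "C u 1 = u" "C 1 v = v" using C u v unfolding is_copula_def by auto
  have bD: "D u 0 = 0" "D 0 v = 0" "D u 1 = u" "D 1 v = v" using D u v unfolding is_copula_def by auto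
  show "(C u v + D u v) / 2 = r * min u v + (1 - r) * (u * v)"
  proof (cases "0 < u \<and> u < 1 \<and> 0 < v \<and> v < 1")
    case True then show ?thesis using inner by blast
  next
    case False
    then have "u = 0 \<or> u = 1 \<or> v = 0 \<or> v = 1" using u v by auto
    then show ?thesis
    proof (elim disjE)
      assume "u = 0" then show ?thesis using bC bD v by (simp add: min_def)
    next
      assume "u = 1" then show ?thesis using bC bD v by (auto simp: min_def algebra_simps)
    next
      assume "v = 0" then show ?thesis using bC bD u by (simp add: min_def)
    next
      assume "v = 1" then show ?thesis using bC bD u by (auto simp: min_def algebra_simps)
    qed
  qed
qed

lemma corr_sym: "corr M A B = corr M B A"
  unfolding corr_def covar_def var_def by (simp add: mult.commute)

context prob_space
begin

lemma var_same:
  fixes Xi Xj :: "'a \<Rightarrow> real"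
  assumes Xi[measurable]: "Xi \<in> borel_measurable M" "Xj \<in> borel_measurable M"
    and same: "distr M borel Xi = distr M borel Xj"
  shows "var M Xi = var M Xj"
proof -
  have m: "expectation Xj = expectation Xi"
    using distr_transfer(2)[of Xi Xj "\<lambda>x. x", OF Xi(1) Xi(2) _ same] by simp
  define m where "m = expectation Xi"
  have "var M Xj = expectation (\<lambda>\<omega>. (Xj \<omega> - m) * (Xj \<omega> - m))"
    unfolding var_def covar_def m_def m ..
  also have "\<dots> = expectation (\<lambda>\<omega>. (Xi \<omega> - m) * (Xi \<omega> - m))"
    using distr_transfer(2)[of Xi Xj "\<lambda>x. (x - m) * (x - m)", OF Xi(1) Xi(2) _ same] by simp
  also have "\<dots> = var M Xi" unfolding var_def covar_def m_def ..
  finally show ?thesis ..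
qed

lemma psd_cov:
  fixes X :: "nat \<Rightarrow> 'a \<Rightarrow> real" and x :: "nat \<Rightarrow> real"
  assumes rv: "\<And>i. i < d \<Longrightarrow> X i \<in> borel_measurable M"
    and sq: "\<And>i. i < d \<Longrightarrow> integrable M (\<lambda>\<omega>. (X i \<omega>)^2)"
  shows "0 \<le> (\<Sum>i<d. \<Sum>j<d. x i * covar M (X i) (X j) * x j)"
proof -
  define Y where "Y i \<omega> = X i \<omega> - expectation (X i)" for i \<omega>
  have Ym: "Y i \<in> borel_measurable M" if "i < d" for i
    unfolding Y_def[abs_def] using rv[OF that] by measurable
  have Ysq: "integrable M (\<lambda>\<omega>. (Y i \<omega>)^2)" if "i < d" for i
  proof -
    have "integrable M (X i)"
      by (rule square_integrable_imp_integrable) (use rv[OF that] sq[OF that] in auto)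
    moreover have "(\<lambda>\<omega>. (Y i \<omega>)^2) = (\<lambda>\<omega>. (X i \<omega>)^2 - 2 * expectation (X i) * X i \<omega> + (expectation (X i))^2)"
      by (simp add: fun_eq_iff Y_def power2_diff algebra_simps)
    ultimately show ?thesis using sq[OF that] by simp
  qed
  have YY: "integrable M (\<lambda>\<omega>. Y i \<omega> * Y j \<omega>)" if "i < d" "j < d" for i j
    by (rule integrable_mult_sq) (use Ym Ysq that in auto)
  have cov: "covar M (X i) (X j) = expectation (\<lambda>\<omega>. Y i \<omega> * Y j \<omega>)" for i j
    unfolding covar_def Y_def ..
  have "(\<Sum>i<d. \<Sum>j<d. x i * covar M (X i) (X j) * x j)
      = (\<Sum>i<d. \<Sum>j<d. expectation (\<lambda>\<omega>. x i * (Y i \<omega> * Y j \<omega>) * x j))"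
    unfolding cov by (intro sum.cong refl) simp
  also have "\<dots> = (\<Sum>i<d. expectation (\<lambda>\<omega>. \<Sum>j<d. x i * (Y i \<omega> * Y j \<omega>) * x j))"
    by (intro sum.cong refl Bochner_Integration.integral_sum[symmetric]) (use YY in simp)
  also have "\<dots> = expectation (\<lambda>\<omega>. \<Sum>i<d. \<Sum>j<d. x i * (Y i \<omega> * Y j \<omega>) * x j)"
    by (intro Bochner_Integration.integral_sum[symmetric] Bochner_Integration.integrable_sum) (use YY in simp)
  also have "\<dots> = expectation (\<lambda>\<omega>. (\<Sum>i<d. x i * Y i \<omega>)^2)"
    by (intro Bochner_Integration.integral_cong refl)
       (simp add: power2_eq_square sum_product algebra_simps)
  also have "\<dots> \<ge> 0" by simp
  finally show ?thesis .
qed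

lemma pair_forward:
  fixes Xi Xj :: "'a \<Rightarrow> real"
  assumes Xi[measurable]: "Xi \<in> borel_measurable M" and Xj[measurable]: "Xj \<in> borel_measurable M"
    and ai: "\<And>x. prob {\<omega> \<in> space M. Xi \<omega> = x} = 0" and aj: "\<And>x. prob {\<omega> \<in> space M. Xj \<omega> = x} = 0"
    and same: "distr M borel Xi = distr M borel Xj"
    and ic: "inv_corr M Xi Xj r"
  shows "r \<in> {0..1} \<and> (\<forall>C D. copula_of M Xi Xj C \<longrightarrow> copula_of M Xj Xi D \<longrightarrow>
          (\<forall>u\<in>{0..1}. \<forall>v\<in>{0..1}. (C u v + D u v) / 2 = r * min u v + (1 - r) * (u * v)))"
proof -
  let ?F = "cdf_of M Xi"
  have Fj: "cdf_of M Xj = ?F" using cdf_of_eq_cdf[OF Xi] cdf_of_eq_cdf[OF Xj] same by simp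
  have ident: "\<forall>u\<in>{0..1}. \<forall>v\<in>{0..1}. (C u v + D u v) / 2 = r * min u v + (1 - r) * (u * v)"
    if C: "copula_of M Xi Xj C" and D: "copula_of M Xj Xi D" for C D
  proof (rule identity_extend)
    show "is_copula C" "is_copula D" using C D unfolding copula_of_def by auto
    fix u v :: real assume u: "0 < u" "u < 1" and v: "0 < v" "v < 1"
    obtain x where x: "?F x = u" using cdf_of_ivt[OF Xi ai u] by blast
    obtain y where y: "?F y = v" using cdf_of_ivt[OF Xi ai v] by blast
    have "C u v = prob {\<omega> \<in> space M. Xi \<omega> \<le> x \<and> Xj \<omega> \<le> y}"
      using C x y Fj unfolding copula_of_def by simp
    moreover have "D u v = prob {\<omega> \<in> space M. Xj \<omega> \<le> x \<and> Xi \<omega> \<le> y}"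
      using D x y Fj unfolding copula_of_def by simp
    moreover have "prob {\<omega>\<in>space M. Xi \<omega> \<le> x \<and> Xj \<omega> \<le> y} + prob {\<omega>\<in>space M. Xj \<omega> \<le> x \<and> Xi \<omega> \<le> y}
       = 2 * (r * min (?F x) (?F y) + (1 - r) * (?F x * ?F y))"
      by (rule ind_identity[OF Xi Xj same ic]) (use x y u v in auto)
    ultimately show "(C u v + D u v) / 2 = r * min u v + (1 - r) * (u * v)" using x y by simp
  qed
  have c1: "copula_of M Xi Xj (cop M Xi Xj)" by (rule cop_copula_of[OF Xi ai Xj aj])
  have c2: "copula_of M Xj Xi (cop M Xj Xi)" by (rule cop_copula_of[OF Xj aj Xi ai])
  have "r \<in> {0..1}"
    by (rule r_range[OF _ _ ident[OF c1 c2]]) (use c1 c2 in \<open>auto simp: copula_of_def\<close>)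
  then show ?thesis using ident by blast
qed

lemma pair_backward:
  fixes Xi Xj :: "'a \<Rightarrow> real"
  assumes Xi[measurable]: "Xi \<in> borel_measurable M" and Xj[measurable]: "Xj \<in> borel_measurable M"
    and ai: "\<And>x. prob {\<omega> \<in> space M. Xi \<omega> = x} = 0" and aj: "\<And>x. prob {\<omega> \<in> space M. Xj \<omega> = x} = 0"
    and same: "distr M borel Xi = distr M borel Xj"
    and r: "r \<in> {0..1}"
    and hyp: "\<forall>C D. copula_of M Xi Xj C \<longrightarrow> copula_of M Xj Xi D \<longrightarrow>
          (\<forall>u\<in>{0..1}. \<forall>v\<in>{0..1}. (C u v + D u v) / 2 = r * min u v + (1 - r) * (u * v))"
    and g[measurable]: "g \<in> borel_measurable borel"
    and fv: "finite_var M (g \<circ> Xi)" and nd: "nondegenerate M (g \<circ> Xi)"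
  shows "corr M (g \<circ> Xi) (g \<circ> Xj) = r"
proof -
  let ?F = "cdf_of M Xi"
  have Fj: "cdf_of M Xj = ?F" using cdf_of_eq_cdf[OF Xi] cdf_of_eq_cdf[OF Xj] same by simp
  have c1: "copula_of M Xi Xj (cop M Xi Xj)" by (rule cop_copula_of[OF Xi ai Xj aj])
  have c2: "copula_of M Xj Xi (cop M Xj Xi)" by (rule cop_copula_of[OF Xj aj Xi ai])
  have id: "\<forall>u\<in>{0..1}. \<forall>v\<in>{0..1}. (cop M Xi Xj u v + cop M Xj Xi u v) / 2 = r * min u v + (1 - r) * (u * v)"
    using hyp c1 c2 by blast
  note PF = cdf_of_props[OF Xi ai]
  have quad: "prob {\<omega>\<in>space M. Xi \<omega> \<le> x \<and> Xj \<omega> \<le> y} + prob {\<omega>\<in>space M. Xj \<omega> \<le> x \<and> Xi \<omega> \<le> y}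
       = 2 * (r * min (?F x) (?F y) + (1 - r) * (?F x * ?F y))" for x y
  proof -
    have "prob {\<omega>\<in>space M. Xi \<omega> \<le> x \<and> Xj \<omega> \<le> y} = cop M Xi Xj (?F x) (?F y)"
      using c1 Fj unfolding copula_of_def by simp
    moreover have "prob {\<omega>\<in>space M. Xj \<omega> \<le> x \<and> Xi \<omega> \<le> y} = cop M Xj Xi (?F x) (?F y)"
      using c2 Fj unfolding copula_of_def by simp
    moreover have "?F x \<in> {0..1}" "?F y \<in> {0..1}" using PF(5,6) by auto
    ultimately show ?thesis using id by fastforce
  qed
  have sq: "integrable M (\<lambda>\<omega>. (g (Xi \<omega>))^2)" using fv by (simp add: finite_var_def o_def)
  have mom: "expectation (\<lambda>\<omega>. g (Xi \<omega>) * g (Xj \<omega>))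
     = r * expectation (\<lambda>\<omega>. (g (Xi \<omega>))^2) + (1 - r) * (expectation (\<lambda>\<omega>. g (Xi \<omega>)))^2"
    by (rule sym_identity[OF Xi Xj same _ _ quad g sq]) (use r in auto)
  have pos: "expectation (\<lambda>\<omega>. (g (Xi \<omega>))^2) - (expectation (\<lambda>\<omega>. g (Xi \<omega>)))^2 > 0"
    by (rule corr_formula(2)[OF Xi Xj same g sq nd])
  have "corr M (g \<circ> Xi) (g \<circ> Xj) =
      (expectation (\<lambda>\<omega>. g (Xi \<omega>) * g (Xj \<omega>)) - (expectation (\<lambda>\<omega>. g (Xi \<omega>)))^2)
      / (expectation (\<lambda>\<omega>. (g (Xi \<omega>))^2) - (expectation (\<lambda>\<omega>. g (Xi \<omega>)))^2)"
    by (rule corr_formula(1)[OF Xi Xj same g sq nd])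
  also have "\<dots> = r * (expectation (\<lambda>\<omega>. (g (Xi \<omega>))^2) - (expectation (\<lambda>\<omega>. g (Xi \<omega>)))^2)
      / (expectation (\<lambda>\<omega>. (g (Xi \<omega>))^2) - (expectation (\<lambda>\<omega>. g (Xi \<omega>)))^2)"
    unfolding mom by (simp add: algebra_simps)
  also have "\<dots> = r" using pos by simp
  finally show ?thesis .
qed

lemma pair_diag:
  fixes Xi :: "'a \<Rightarrow> real"
  assumes Xi[measurable]: "Xi \<in> borel_measurable M"
    and g[measurable]: "g \<in> borel_measurable borel"
    and fv: "finite_var M (g \<circ> Xi)" and nd: "nondegenerate M (g \<circ> Xi)"
  shows "corr M (g \<circ> Xi) (g \<circ> Xi) = 1"
proof -
  have sq: "integrable M (\<lambda>\<omega>. (g (Xi \<omega>))^2)" using fv by (simp add: finite_var_def o_def)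
  have pos: "expectation (\<lambda>\<omega>. (g (Xi \<omega>))^2) - (expectation (\<lambda>\<omega>. g (Xi \<omega>)))^2 > 0"
    by (rule corr_formula(2)[OF Xi Xi refl g sq nd])
  have "corr M (g \<circ> Xi) (g \<circ> Xi) =
      (expectation (\<lambda>\<omega>. g (Xi \<omega>) * g (Xi \<omega>)) - (expectation (\<lambda>\<omega>. g (Xi \<omega>)))^2)
      / (expectation (\<lambda>\<omega>. (g (Xi \<omega>))^2) - (expectation (\<lambda>\<omega>. g (Xi \<omega>)))^2)"
    by (rule corr_formula(1)[OF Xi Xi refl g sq nd])
  also have "\<dots> = 1" using pos by (simp add: power2_eq_square)
  finally show ?thesis .
qed

end

theorem proposition7:
  fixes M :: "'a measure" and d :: nat and X :: "nat \<Rightarrow> 'a \<Rightarrow> real"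
  assumes "prob_space M"
    and "d \<ge> 2"
    and rv: "\<And>i. i < d \<Longrightarrow> X i \<in> borel_measurable M"
    and continuous: "\<And>i x. i < d \<Longrightarrow> measure M {\<omega> \<in> space M. X i \<omega> = x} = 0"
    and identical: "\<And>i j. i < d \<Longrightarrow> j < d \<Longrightarrow> distr M borel (X i) = distr M borel (X j)"
    and fin_var: "\<And>i. i < d \<Longrightarrow> integrable M (\<lambda>\<omega>. (X i \<omega>)^2)"
    and nonzero_var: "\<And>i. i < d \<Longrightarrow> var M (X i) \<noteq> 0"
  shows "IC M d X \<longleftrightarrow>
    (\<forall>i<d. \<forall>j<d. i \<noteq> j \<longrightarrow>
       (\<exists>r\<in>{0..1}. \<forall>C D. copula_of M (X i) (X j) C \<longrightarrow> copula_of M (X j) (X i) D \<longrightarrow>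
          (\<forall>u\<in>{0..1}. \<forall>v\<in>{0..1}.
             (C u v + D u v) / 2 = r * min u v + (1 - r) * (u * v))))"
proof -
  interpret P: prob_space M by fact
  have fvX: "finite_var M (X i)" if "i < d" for i
    using rv[OF that] fin_var[OF that] unfolding finite_var_def by simp
  have ndX: "nondegenerate M (X i)" if i: "i < d" for i
    unfolding nondegenerate_def
  proof
    assume "\<exists>c. AE \<omega> in M. X i \<omega> = c"
    then obtain c where c: "AE \<omega> in M. X i \<omega> = c" by blast
    have [measurable]: "X i \<in> borel_measurable M" using rv[OF i] .
    have "P.prob {\<omega> \<in> space M. X i \<omega> \<noteq> c} = 0" using c by (simp add: P.prob_eq_0)
    moreover have "{\<omega> \<in> space M. X i \<omega> = c} = space M - {\<omega> \<in> space M. X i \<omega> \<noteq> c}" by auto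
    moreover have "P.prob (space M - {\<omega> \<in> space M. X i \<omega> \<noteq> c}) = 1 - P.prob {\<omega> \<in> space M. X i \<omega> \<noteq> c}"
      by (rule P.prob_compl) measurable
    ultimately have "P.prob {\<omega> \<in> space M. X i \<omega> = c} = 1" by simp
    then show False using continuous[OF i, of c] by simp
  qed
  show ?thesis
  proof
    assume "IC M d X"
    then obtain R where R: "correlation_matrix d R" "\<And>i j. i < d \<Longrightarrow> j < d \<Longrightarrow> inv_corr M (X i) (X j) (R i j)"
      unfolding IC_def by blast
    show "\<forall>i<d. \<forall>j<d. i \<noteq> j \<longrightarrow>
       (\<exists>r\<in>{0..1}. \<forall>C D. copula_of M (X i) (X j) C \<longrightarrow> copula_of M (X j) (X i) D \<longrightarrow>
          (\<forall>u\<in>{0..1}. \<forall>v\<in>{0..1}. (C u v + D u v) / 2 = r * min u v + (1 - r) * (u * v)))"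
    proof (intro allI impI)
      fix i j assume i: "i < d" and j: "j < d" and "i \<noteq> j"
      have "R i j \<in> {0..1} \<and> (\<forall>C D. copula_of M (X i) (X j) C \<longrightarrow> copula_of M (X j) (X i) D \<longrightarrow>
          (\<forall>u\<in>{0..1}. \<forall>v\<in>{0..1}. (C u v + D u v) / 2 = R i j * min u v + (1 - R i j) * (u * v)))"
        by (rule P.pair_forward[OF rv[OF i] rv[OF j] continuous[OF i] continuous[OF j] identical[OF i j] R(2)[OF i j]])
      then show "\<exists>r\<in>{0..1}. \<forall>C D. copula_of M (X i) (X j) C \<longrightarrow> copula_of M (X j) (X i) D \<longrightarrow>
          (\<forall>u\<in>{0..1}. \<forall>v\<in>{0..1}. (C u v + D u v) / 2 = r * min u v + (1 - r) * (u * v))"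
        by blast
    qed
  next
    assume H: "\<forall>i<d. \<forall>j<d. i \<noteq> j \<longrightarrow>
       (\<exists>r\<in>{0..1}. \<forall>C D. copula_of M (X i) (X j) C \<longrightarrow> copula_of M (X j) (X i) D \<longrightarrow>
          (\<forall>u\<in>{0..1}. \<forall>v\<in>{0..1}. (C u v + D u v) / 2 = r * min u v + (1 - r) * (u * v)))"
    define R where "R i j = corr M (X i) (X j)" for i j
    have idm: "(\<lambda>x::real. x) \<in> borel_measurable borel" by simp
    have idc: "(\<lambda>x::real. x) \<circ> X i = X i" for i by (simp add: o_def)
    have G: "\<exists>c. \<forall>g\<in>borel_measurable (borel :: real measure).
        finite_var M (g \<circ> X i) \<and> nondegenerate M (g \<circ> X i) \<longrightarrow> corr M (g \<circ> X i) (g \<circ> X j) = c"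
      if i: "i < d" and j: "j < d" for i j
    proof (cases "i = j")
      case True
      show ?thesis
        by (rule exI[of _ 1]) (use True P.pair_diag[OF rv[OF i]] in blast)
    next
      case False
      then obtain r where r: "r \<in> {0..1}" and hr: "\<forall>C D. copula_of M (X i) (X j) C \<longrightarrow> copula_of M (X j) (X i) D \<longrightarrow>
          (\<forall>u\<in>{0..1}. \<forall>v\<in>{0..1}. (C u v + D u v) / 2 = r * min u v + (1 - r) * (u * v))"
        using H i j by blast
      show ?thesis
        by (rule exI[of _ r])
          (use P.pair_backward[OF rv[OF i] rv[OF j] continuous[OF i] continuous[OF j] identical[OF i j] r hr] in blast)
    qed
    have GR: "corr M (g \<circ> X i) (g \<circ> X j) = R i j"
      if i: "i < d" and j: "j < d" and g: "g \<in> borel_measurable borel"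
        and fv: "finite_var M (g \<circ> X i)" and nd: "nondegenerate M (g \<circ> X i)" for i j g
    proof -
      obtain c where c: "\<forall>g\<in>borel_measurable (borel :: real measure).
        finite_var M (g \<circ> X i) \<and> nondegenerate M (g \<circ> X i) \<longrightarrow> corr M (g \<circ> X i) (g \<circ> X j) = c"
        using G[OF i j] by blast
      have "finite_var M ((\<lambda>x. x) \<circ> X i) \<and> nondegenerate M ((\<lambda>x. x) \<circ> X i) \<longrightarrow>
          corr M ((\<lambda>x. x) \<circ> X i) ((\<lambda>x. x) \<circ> X j) = c"
        using c idm by blast
      then have "R i j = c" unfolding R_def idc using fvX[OF i] ndX[OF i] by blast
      then show ?thesis using c g fv nd by blast
    qed
    have inv: "inv_corr M (X i) (X j) (R i j)" if i: "i < d" and j: "j < d" for i j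
      unfolding inv_corr_def using fvX[OF i] fvX[OF j] ndX[OF i] ndX[OF j] GR[OF i j]
      by (auto simp: R_def)
    have cm: "correlation_matrix d R"
      unfolding correlation_matrix_def
    proof (intro conjI allI impI)
      fix i assume i: "i < d"
      have "finite_var M ((\<lambda>x. x) \<circ> X i) \<Longrightarrow> nondegenerate M ((\<lambda>x. x) \<circ> X i) \<Longrightarrow>
          corr M ((\<lambda>x. x) \<circ> X i) ((\<lambda>x. x) \<circ> X i) = 1"
        by (rule P.pair_diag[OF rv[OF i] idm])
      then show "R i i = 1" unfolding R_def idc using fvX[OF i] ndX[OF i] by blast
    next
      fix i j assume "i < d" "j < d"
      show "R i j = R j i" unfolding R_def by (rule corr_sym)
    next
      fix x :: "nat \<Rightarrow> real"
      have d0: "0 < d" using \<open>d \<ge> 2\<close> by simp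
      define v where "v = var M (X 0)"
      have vi: "var M (X i) = v" if "i < d" for i
        unfolding v_def by (rule P.var_same[OF rv[OF that] rv[OF d0] identical[OF that d0]])
      have v0: "v \<ge> 0" unfolding v_def var_def covar_def by simp
      have vpos: "v > 0" using v0 nonzero_var[OF d0] unfolding v_def by simp
      have Rij: "R i j = covar M (X i) (X j) / v" if "i < d" "j < d" for i j
        unfolding R_def corr_def using vi[OF that(1)] vi[OF that(2)] vpos by simp
      have "(\<Sum>i<d. \<Sum>j<d. x i * R i j * x j) = (\<Sum>i<d. \<Sum>j<d. x i * covar M (X i) (X j) * x j) / v"
        by (simp add: sum_divide_distrib Rij)
      moreover have "0 \<le> (\<Sum>i<d. \<Sum>j<d. x i * covar M (X i) (X j) * x j)"
        by (rule P.psd_cov) (use rv fin_var in auto)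
      ultimately show "0 \<le> (\<Sum>i<d. \<Sum>j<d. x i * R i j * x j)" using vpos by simp
    qed
    show "IC M d X" unfolding IC_def using cm inv by blast
  qed
qed

end
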